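(* Let $\mathcal{F}$ be a finite subcollection of $\mathcal{M}(\mathbb{D})$. A composition sequence $F_n=f_1\cdots f_n$ generated by $\mathcal{F}$ is of limit-disc type if and only if both of the following hold: (i) $\alpha_{f_{n-1}}=\beta_{f_n}$ for all but finitely many positive integers $n$; (ii) $\displaystyle\sum_{n=1}^\infty \gamma_{f_1}\gamma_{f_2}\cdots\gamma_{f_n}<+\infty$.
   Context: $\mathbb{D}$ is the open unit disc. $\mathcal{M}(\mathbb{D})$ denotes the set of Möbius transformations $f$ of $\overline{\mathbb{C}}$ with $f(\mathbb{D})\subset\mathbb{D}$ and $f(\mathbb{D})\neq\mathbb{D}$. A composition sequence generated by $\mathcal{F}$ is $(F_n)$ with $F_n=f_1\cdots f_n$, each $f_i\in\mathcal{F}$; it is of limit-disc type if $\bigcap_n F_n(\overline{\mathbb{D}})$ is a closed disc of positive radius (rather than a single point). For $f\in\mathcal{M}(\mathbb{D})$: either $f(\mathbb{D})$ is internally tangent to $\mathbb{D}$ at a unique point, in which case $\alpha_f,\beta_f$ are the unique points of $\partial\mathbb{D}$ with $f(\alpha_f)=\beta_f$; or $\partial f(\mathbb{D})\cap\partial\mathbb{D}=\emptyset$, in which case $\alpha_f=0$ and $\beta_f=\infty$. Define $\gamma_f=1/|f'(\alpha_f)|$. *)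

theory Defs
  imports "HOL-Analysis.Analysis"
begin

text \<open>The extended complex plane is modelled as complex option, None being infinity.\<close>

type_synonym mob = "complex \<times> complex \<times> complex \<times> complex"

definition mob_ok :: "mob \<Rightarrow> bool" where
  "mob_ok m = (case m of (a,b,c,d) \<Rightarrow> a*d - b*c \<noteq> 0)"

fun mob_apply :: "mob \<Rightarrow> complex option \<Rightarrow> complex option" where
  "mob_apply (a,b,c,d) (Some z) =
     (if c*z + d = 0 then None else Some ((a*z + b)/(c*z + d)))"
| "mob_apply (a,b,c,d) None = (if c = 0 then None else Some (a/c))"

fun mob_deriv :: "mob \<Rightarrow> complex \<Rightarrow> complex" where
  "mob_deriv (a,b,c,d) z = (a*d - b*c) / (c*z + d)^2"

abbreviation disc :: "complex option set" where
  "disc \<equiv> Some ` ball 0 1"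

abbreviation cdisc :: "complex option set" where
  "cdisc \<equiv> Some ` cball 0 1"

definition MD :: "mob set" where
  "MD = {m. mob_ok m \<and> mob_apply m ` disc \<subseteq> disc \<and> mob_apply m ` disc \<noteq> disc}"

text \<open>f(D) is internally tangent to D: the boundary of f(D), i.e. f(unit circle),
meets the unit circle.\<close>
definition tangent :: "mob \<Rightarrow> bool" where
  "tangent m = (\<exists>z. cmod z = 1 \<and> mob_apply m (Some z) \<in> Some ` sphere 0 1)"

definition alpha :: "mob \<Rightarrow> complex" where
  "alpha m = (if tangent m
              then (THE z. cmod z = 1 \<and> mob_apply m (Some z) \<in> Some ` sphere 0 1)
              else 0)"

definition beta :: "mob \<Rightarrow> complex option" where
  "beta m = (if tangent m then mob_apply m (Some (alpha m)) else None)"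

definition gamma :: "mob \<Rightarrow> real" where
  "gamma m = 1 / cmod (mob_deriv m (alpha m))"

fun comp_seq :: "(nat \<Rightarrow> mob) \<Rightarrow> nat \<Rightarrow> complex option \<Rightarrow> complex option" where
  "comp_seq f 0 = id"
| "comp_seq f (Suc n) = comp_seq f n \<circ> mob_apply (f (Suc n))"

definition limit_disc_type :: "(nat \<Rightarrow> mob) \<Rightarrow> bool" where
  "limit_disc_type f =
     (\<exists>c r. r > 0 \<and> (\<Inter>n\<in>{1..}. comp_seq f n ` cdisc) = Some ` cball c r)"

end

theory Submission
  imports Defs
begin



lemma nsq: "complex_of_real ((cmod z)^2) = z * cnj z"
  by (rule complex_norm_square)

lemma re2: "complex_of_real (2 * Re z) = z + cnj z"
  by (simp add: complex_add_cnj)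

lemma key_id:
  fixes a b c d :: complex
  shows "((cmod b)^2 - (cmod a)^2) * ((cmod d)^2 - (cmod c)^2) - (cmod (b * cnj d - a * cnj c))^2
         = -((cmod (a*d - b*c))^2)"
proof -
  have "complex_of_real (((cmod b)^2 - (cmod a)^2) * ((cmod d)^2 - (cmod c)^2) - (cmod (b * cnj d - a * cnj c))^2)
      = complex_of_real (-((cmod (a*d - b*c))^2))"
    unfolding of_real_diff of_real_mult of_real_minus nsq by (simp add: algebra_simps)
  then show ?thesis using of_real_eq_iff by blast
qed

lemma Phi_id:
  fixes a b c d w :: complex
  shows "(cmod (d*w - b))^2 - (cmod (a - c*w))^2
       = ((cmod d)^2 - (cmod c)^2) * (cmod w)^2 - 2 * Re (w * cnj (b * cnj d - a * cnj c)) + ((cmod b)^2 - (cmod a)^2)"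
proof -
  have "complex_of_real ((cmod (d*w - b))^2 - (cmod (a - c*w))^2)
    = complex_of_real (((cmod d)^2 - (cmod c)^2) * (cmod w)^2 - 2 * Re (w * cnj (b * cnj d - a * cnj c)) + ((cmod b)^2 - (cmod a)^2))"
    unfolding of_real_diff of_real_add re2 unfolding of_real_mult of_real_diff nsq
    by (simp add: algebra_simps)
  then show ?thesis using of_real_eq_iff by blast
qed

fun ms :: "mob \<Rightarrow> real" where "ms (a,b,c,d) = (cmod d)^2 - (cmod c)^2"
fun me :: "mob \<Rightarrow> complex" where "me (a,b,c,d) = b * cnj d - a * cnj c"
fun mdet :: "mob \<Rightarrow> complex" where "mdet (a,b,c,d) = a*d - b*c"
fun hA :: "mob \<Rightarrow> real" where "hA (a,b,c,d) = (cmod b)^2 - (cmod a)^2"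

lemma mob_ok_det: "mob_ok (a,b,c,d) \<longleftrightarrow> a*d - b*c \<noteq> 0"
  by (simp add: mob_ok_def)

lemma fwd_pt:
  fixes a b c d z :: complex
  assumes "c*z + d \<noteq> 0"
  shows "d * ((a*z+b)/(c*z+d)) - b = (a*d-b*c)*z/(c*z+d)"
    and "a - c*((a*z+b)/(c*z+d)) = (a*d-b*c)/(c*z+d)"
  using assms by (simp_all add: field_simps)

lemma bwd_pt:
  fixes a b c d w :: complex
  assumes "a - c*w \<noteq> 0" "a*d - b*c \<noteq> 0"
  shows "c * ((d*w-b)/(a-c*w)) + d = (a*d-b*c)/(a-c*w)"
    and "c * ((d*w-b)/(a-c*w)) + d \<noteq> 0"
    and "(a * ((d*w-b)/(a-c*w)) + b) / (c * ((d*w-b)/(a-c*w)) + d) = w"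
proof -
  show 1: "c * ((d*w-b)/(a-c*w)) + d = (a*d-b*c)/(a-c*w)"
    using assms by (simp add: field_simps)
  show "c * ((d*w-b)/(a-c*w)) + d \<noteq> 0" unfolding 1 using assms by simp
  have 2: "a * ((d*w-b)/(a-c*w)) + b = (a*d-b*c)*w/(a-c*w)"
    using assms by (simp add: field_simps)
  show "(a * ((d*w-b)/(a-c*w)) + b) / (c * ((d*w-b)/(a-c*w)) + d) = w"
    unfolding 1 2 using assms by simp
qed

lemma nopole:
  assumes "ms (a,b,c,d) > 0" "cmod z \<le> 1"
  shows "c*z + d \<noteq> 0"
proof
  assume "c*z + d = 0"
  have "d = (c*z+d) - c*z" by simp
  then have "d = - (c*z)" using \<open>c*z + d = 0\<close> by simp
  then have "cmod d = cmod c * cmod z" by (simp add: norm_mult)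
  also have "\<dots> \<le> cmod c" using assms(2) by (simp add: mult_left_le)
  finally have "cmod d \<le> cmod c" .
  then have "(cmod d)^2 \<le> (cmod c)^2" by (rule power_mono) simp
  moreover have "ms (a,b,c,d) = (cmod d)^2 - (cmod c)^2" by simp
  ultimately show False using assms(1) by linarith
qed

lemma fwd_map:
  assumes "mob_ok (a,b,c,d)" "c*z + d \<noteq> 0"
  obtains w where "mob_apply (a,b,c,d) (Some z) = Some w"
    "cmod (d*w - b) = cmod z * cmod (a - c*w)" "a - c*w \<noteq> 0"
proof -
  let ?w = "(a*z+b)/(c*z+d)"
  have "cmod (d*?w - b) = cmod z * cmod (a - c*?w)"
    using fwd_pt[OF assms(2), of a b] by (simp add: norm_mult norm_divide)
  moreover have "a - c*?w \<noteq> 0" using fwd_pt[OF assms(2), of a b] assms(1) assms(2)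
    by (simp add: mob_ok_det)
  ultimately show ?thesis using that[of ?w] assms(2) by simp
qed

lemma bwd_map:
  assumes "mob_ok (a,b,c,d)" "a - c*w \<noteq> 0"
  shows "mob_apply (a,b,c,d) (Some ((d*w-b)/(a-c*w))) = Some w"
    "cmod (d*w-b) = cmod ((d*w-b)/(a-c*w)) * cmod (a - c*w)"
  using bwd_pt[OF assms(2)] assms(1) assms(2) by (simp_all add: mob_ok_det norm_divide)

lemma le_nz:
  assumes "mob_ok (a,b,c,d)" "cmod (d*w - b) \<le> cmod (a - c*w)"
  shows "a - c*w \<noteq> 0"
proof
  assume h: "a - c*w = 0"
  then have "d*w - b = 0" using assms(2) by simp
  then have "a*d - b*c = 0" using h
    by (metis (no_types, lifting) eq_iff_diff_eq_0 mult.commute mult.left_commute)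
  then show False using assms(1) by (simp add: mob_ok_det)
qed

lemma sq_expand:
  fixes s :: real and w e :: complex
  assumes "s \<noteq> 0"
  shows "s * (cmod (w - e / complex_of_real s))^2 = s*(cmod w)^2 - 2*Re (w * cnj e) + (cmod e)^2/s"
proof -
  have "complex_of_real (s * (cmod (w - e / complex_of_real s))^2)
      = complex_of_real (s*(cmod w)^2 - 2*Re (w * cnj e) + (cmod e)^2/s)"
    unfolding of_real_diff of_real_add re2 unfolding of_real_mult of_real_divide nsq
    using assms by (simp add: field_simps)
  then show ?thesis using of_real_eq_iff by blast
qed

lemma Phi2:
  fixes a b c d w :: complex
  assumes "ms (a,b,c,d) > 0"
  defines "s \<equiv> ms (a,b,c,d)"
  shows "(cmod (d*w - b))^2 - (cmod (a - c*w))^2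
       = s * (cmod (w - me (a,b,c,d) / complex_of_real s))^2 - (cmod (a*d-b*c))^2 / s"
proof -
  have "ms (a,b,c,d) = (cmod d)^2 - (cmod c)^2" by simp
  then have s0: "s \<noteq> 0" unfolding s_def using assms(1) by linarith
  have k: "(cmod (me (a,b,c,d)))^2 = hA (a,b,c,d) * s + (cmod (a*d-b*c))^2"
    using key_id[of b a d c] unfolding s_def by simp
  have "(cmod (me (a,b,c,d)))^2 / s = hA (a,b,c,d) + (cmod (a*d-b*c))^2 / s"
    unfolding k using s0 by (simp add: field_simps)
  then show ?thesis using Phi_id[of d w b a c] sq_expand[OF s0, of w "me (a,b,c,d)"]
    unfolding s_def by simp
qed

lemma rel_iff:
  fixes a b c d w :: complex
  assumes "ms (a,b,c,d) > 0"
  defines "s \<equiv> ms (a,b,c,d)"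
  defines "Z \<equiv> me (a,b,c,d) / complex_of_real s" and "R \<equiv> cmod (a*d-b*c) / s"
  shows "cmod (d*w - b) \<le> cmod (a - c*w) \<longleftrightarrow> cmod (w - Z) \<le> R"
    and "cmod (d*w - b) < cmod (a - c*w) \<longleftrightarrow> cmod (w - Z) < R"
    and "cmod (d*w - b) = cmod (a - c*w) \<longleftrightarrow> cmod (w - Z) = R"
proof -
  have s0: "s > 0" using assms by simp
  have P0: "(cmod (d*w - b))^2 - (cmod (a - c*w))^2 = s * (cmod (w - Z))^2 - (cmod (a*d-b*c))^2 / s"
    using Phi2[OF assms(1), of w] unfolding s_def Z_def .
  have "s*R^2 = (cmod (a*d-b*c))^2 / s" unfolding R_def using s0 by (simp add: power_divide power2_eq_square)
  then have P: "(cmod (d*w - b))^2 - (cmod (a - c*w))^2 = s * ((cmod (w - Z))^2 - R^2)"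
    using P0 by (simp add: right_diff_distrib)
  have R0: "R \<ge> 0" unfolding R_def using s0 by simp
  have sq1: "x \<le> y \<longleftrightarrow> x^2 \<le> y^2" if "x \<ge> 0" "y \<ge> 0" for x y :: real
    using that by (simp add: power_mono_iff)
  have sq2: "x < y \<longleftrightarrow> x^2 < y^2" if "x \<ge> 0" "y \<ge> 0" for x y :: real
    using that by (meson not_le sq1)
  have sq3: "x = y \<longleftrightarrow> x^2 = y^2" if "x \<ge> 0" "y \<ge> 0" for x y :: real
    using that by (simp add: power2_eq_iff_nonneg)
  have t1: "x \<le> 0 \<longleftrightarrow> y \<le> 0" if "x = s*y" for x y using that s0
    by (simp add: mult_le_0_iff)
  have t2: "x < 0 \<longleftrightarrow> y < 0" if "x = s*y" for x y using that s0
    by (simp add: mult_less_0_iff)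
  have t3: "x = 0 \<longleftrightarrow> y = 0" if "x = s*y" for x y using that s0
    by simp
  show "cmod (d*w - b) \<le> cmod (a - c*w) \<longleftrightarrow> cmod (w - Z) \<le> R"
    using sq1[of "cmod (d*w - b)" "cmod (a - c*w)"] sq1[of "cmod (w - Z)" R] R0 t1[OF P] by simp
  show "cmod (d*w - b) < cmod (a - c*w) \<longleftrightarrow> cmod (w - Z) < R"
    using sq2[of "cmod (d*w - b)" "cmod (a - c*w)"] sq2[of "cmod (w - Z)" R] R0 t2[OF P] by simp
  show "cmod (d*w - b) = cmod (a - c*w) \<longleftrightarrow> cmod (w - Z) = R"
    using sq3[of "cmod (d*w - b)" "cmod (a - c*w)"] sq3[of "cmod (w - Z)" R] R0 t3[OF P] by simp
qed




lemma img_gen: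
  assumes ok: "mob_ok (a,b,c,d)" and sp: "ms (a,b,c,d) > 0"
  and PQ: "\<And>x y::real. x \<ge> 0 \<Longrightarrow> y > 0 \<Longrightarrow> Q (x*y) y \<longleftrightarrow> P x"
  and Qle: "\<And>x y. Q x y \<Longrightarrow> x \<le> y"
  and rel: "\<And>w. Q (cmod (d*w - b)) (cmod (a - c*w)) \<longleftrightarrow> T w"
  shows "mob_apply (a,b,c,d) ` (Some ` {z. P (cmod z)}) = Some ` {w. T w}"
proof (intro equalityI subsetI)
  fix x assume "x \<in> mob_apply (a,b,c,d) ` (Some ` {z. P (cmod z)})"
  then obtain z where z: "P (cmod z)" "x = mob_apply (a,b,c,d) (Some z)" by auto
  have "cmod z \<le> 1"
  proof -
    have "Q (cmod z * 1) 1" using PQ[of "cmod z" 1] z(1) by simp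
    then show ?thesis using Qle by fastforce
  qed
  then have np: "c*z + d \<noteq> 0" using nopole[OF sp] by blast
  obtain w where w: "mob_apply (a,b,c,d) (Some z) = Some w"
    "cmod (d*w - b) = cmod z * cmod (a - c*w)" "a - c*w \<noteq> 0"
    using fwd_map[OF ok np] by blast
  have "Q (cmod (d*w - b)) (cmod (a - c*w))" unfolding w(2)
    using PQ[of "cmod z" "cmod (a - c*w)"] z(1) w(3) by simp
  then have "T w" using rel by blast
  then show "x \<in> Some ` {w. T w}" using z(2) w(1) by simp
next
  fix x assume "x \<in> Some ` {w. T w}"
  then obtain w where w: "T w" "x = Some w" by auto
  have q: "Q (cmod (d*w - b)) (cmod (a - c*w))" using rel w(1) by blast
  then have nz: "a - c*w \<noteq> 0" using le_nz[OF ok] Qle by blast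
  let ?z = "(d*w-b)/(a-c*w)"
  have "Q (cmod ?z * cmod (a - c*w)) (cmod (a - c*w))" using q bwd_map(2)[OF ok nz] by simp
  then have "P (cmod ?z)" using PQ[of "cmod ?z" "cmod (a - c*w)"] nz by simp
  then show "x \<in> mob_apply (a,b,c,d) ` (Some ` {z. P (cmod z)})"
    using bwd_map(1)[OF ok nz] w(2) by (metis (mono_tags, lifting) image_eqI mem_Collect_eq)
qed

lemma cball_set: "cball (0::complex) 1 = {z. cmod z \<le> 1}" by auto
lemma ball_set: "ball (0::complex) 1 = {z. cmod z < 1}" by auto
lemma sphere_set: "sphere (0::complex) 1 = {z. cmod z = 1}" by auto
lemma cball_set2: "cball Z R = {w. cmod (w - Z) \<le> R}" by (auto simp: dist_norm norm_minus_commute)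
lemma ball_set2: "ball Z R = {w. cmod (w - Z) < R}" by (auto simp: dist_norm norm_minus_commute)
lemma sphere_set2: "sphere Z R = {w. cmod (w - Z) = R}" by (auto simp: dist_norm norm_minus_commute)

definition "mZ m = me m / complex_of_real (ms m)"
definition "mR m = cmod (mdet m) / ms m"

lemma img_cball:
  assumes ok: "mob_ok (a,b,c,d)" and sp: "ms (a,b,c,d) > 0"
  shows "mob_apply (a,b,c,d) ` cdisc = Some ` cball (mZ (a,b,c,d)) (mR (a,b,c,d))"
  unfolding cball_set unfolding cball_set2 mZ_def mR_def
  by (rule img_gen[OF ok sp, where Q = "\<lambda>x y. x \<le> y" and P = "\<lambda>x. x \<le> 1"])
     (auto simp: rel_iff(1)[OF sp] mult_le_cancel_right2)

lemma img_ball: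
  assumes ok: "mob_ok (a,b,c,d)" and sp: "ms (a,b,c,d) > 0"
  shows "mob_apply (a,b,c,d) ` disc = Some ` ball (mZ (a,b,c,d)) (mR (a,b,c,d))"
  unfolding ball_set unfolding ball_set2 mZ_def mR_def
  by (rule img_gen[OF ok sp, where Q = "\<lambda>x y. x < y" and P = "\<lambda>x. x < 1"])
     (auto simp: rel_iff(2)[OF sp] mult_less_cancel_right2)

lemma img_sphere:
  assumes ok: "mob_ok (a,b,c,d)" and sp: "ms (a,b,c,d) > 0"
  shows "mob_apply (a,b,c,d) ` (Some ` sphere 0 1) = Some ` sphere (mZ (a,b,c,d)) (mR (a,b,c,d))"
  unfolding sphere_set unfolding sphere_set2 mZ_def mR_def
  by (rule img_gen[OF ok sp, where Q = "\<lambda>x y. x = y" and P = "\<lambda>x. x = 1"])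
     (auto simp: rel_iff(3)[OF sp])


lemma MD_imp:
  assumes m: "(a,b,c,d) \<in> MD" and lt: "cmod (d*w - b) < cmod (a - c*w)"
  shows "cmod w < 1"
proof -
  have ok: "mob_ok (a,b,c,d)" using m by (simp add: MD_def)
  have nz: "a - c*w \<noteq> 0" using le_nz[OF ok] lt by simp
  let ?z = "(d*w-b)/(a-c*w)"
  have "cmod ?z < 1" using lt nz by (simp add: norm_divide)
  then have "Some ?z \<in> disc" by simp
  then have "mob_apply (a,b,c,d) (Some ?z) \<in> mob_apply (a,b,c,d) ` disc" by (rule imageI)
  then have "mob_apply (a,b,c,d) (Some ?z) \<in> disc" using m unfolding MD_def by blast
  then show ?thesis unfolding bwd_map(1)[OF ok nz] by auto
qed

lemma MD_sq:
  assumes m: "(a,b,c,d) \<in> MD" and lt: "(cmod (d*w - b))^2 < (cmod (a - c*w))^2"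
  shows "cmod w < 1"
  using MD_imp[OF m] lt by (meson norm_ge_zero power_mono not_le)

lemma MD_spos:
  assumes m: "(a,b,c,d) \<in> MD"
  shows "ms (a,b,c,d) > 0"
proof (rule ccontr)
  assume "\<not> ms (a,b,c,d) > 0"
  then have sle: "ms (a,b,c,d) \<le> 0" by linarith
  define s where "s = ms (a,b,c,d)"
  define e where "e = me (a,b,c,d)"
  define h where "h = hA (a,b,c,d)"
  have sle': "s \<le> 0" unfolding s_def by (rule sle)
  have ok: "a*d - b*c \<noteq> 0" using m by (simp add: MD_def mob_ok_def)
  have Phi: "(cmod (d*w - b))^2 - (cmod (a - c*w))^2 = s * (cmod w)^2 - 2 * Re (w * cnj e) + h" for w
    using Phi_id[of d w b a c] unfolding s_def e_def h_def by simp
  have key: "h * s - (cmod e)^2 = - ((cmod (a*d-b*c))^2)"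
    using key_id[of b a d c] unfolding s_def e_def h_def by simp
  show False
  proof (cases "e = 0")
    case False
    define t where "t = 1 + \<bar>h\<bar> / (2 * cmod e)"
    have e0: "cmod e > 0" using False by simp
    have t1: "t \<ge> 1" unfolding t_def using e0 by simp
    define w where "w = complex_of_real t * (e / complex_of_real (cmod e))"
    have nw: "cmod w = t" unfolding w_def using e0 t1 by (simp add: norm_mult norm_divide)
    have "w * cnj e = complex_of_real (t * cmod e)"
      unfolding w_def using e0 by (simp add: complex_norm_square[symmetric] power2_eq_square field_simps)
    then have re: "Re (w * cnj e) = t * cmod e" by simp
    have "s * (cmod w)^2 \<le> 0" using sle' by (simp add: mult_nonpos_nonneg)
    moreover have "2 * (t * cmod e) = 2 * cmod e + \<bar>h\<bar>" unfolding t_def using e0 by (simp add: field_simps)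
    ultimately have "(cmod (d*w - b))^2 - (cmod (a - c*w))^2 < 0" unfolding Phi re using e0 abs_ge_self[of h] by linarith
    then have "cmod w < 1" using MD_sq[OF m] by simp
    then show False using nw t1 by simp
  next
    case True
    then have "h * s < 0" using key ok by simp
    then have sn: "s < 0" using sle s_def by (metis mult_zero_right order_less_irrefl order.not_eq_order_implies_strict)
    define t where "t = 1 + \<bar>h\<bar> / (- s)"
    have t1: "t \<ge> 1" unfolding t_def using sn by (simp add: divide_nonneg_neg)
    define w where "w = complex_of_real t"
    have nw: "cmod w = t" unfolding w_def using t1 by simp
    have st: "s * t = s - \<bar>h\<bar>" unfolding t_def using sn by (simp add: field_simps)
    have "s * t^2 \<le> s * t" using sn t1 by (simp add: power2_eq_square mult_le_cancel_left)
    then have "(cmod (d*w - b))^2 - (cmod (a - c*w))^2 < 0" unfolding Phi nw True st using sn abs_ge_self[of h] by simp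
    then have "cmod w < 1" using MD_sq[OF m] by simp
    then show False using nw t1 by simp
  qed
qed

lemma MD_props:
  assumes m: "(a,b,c,d) \<in> MD"
  shows "mob_ok (a,b,c,d)" "ms (a,b,c,d) > 0"
    "cmod (me (a,b,c,d)) + cmod (a*d-b*c) \<le> ms (a,b,c,d)"
    "cmod (a*d-b*c) < ms (a,b,c,d)"
proof -
  show ok: "mob_ok (a,b,c,d)" using m by (simp add: MD_def)
  show sp: "ms (a,b,c,d) > 0" by (rule MD_spos[OF m])
  have d0: "a*d-b*c \<noteq> 0" using ok by (simp add: mob_ok_def)
  let ?Z = "mZ (a,b,c,d)" and ?R = "mR (a,b,c,d)"
  have R0: "?R > 0" unfolding mR_def using sp d0 by simp
  have im: "mob_apply (a,b,c,d) ` disc = Some ` ball ?Z ?R" by (rule img_ball[OF ok sp])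
  have "Some ` ball ?Z ?R \<subseteq> Some ` ball 0 1" using m im by (simp add: MD_def)
  then have sub: "ball ?Z ?R \<subseteq> ball 0 1" by (simp add: inj_image_subset_iff)
  have "Some ` ball ?Z ?R \<noteq> Some ` ball 0 1" using m im by (simp add: MD_def)
  then have ne: "ball ?Z ?R \<noteq> ball 0 1" by auto
  have l1: "cmod ?Z + ?R \<le> 1" using sub R0 ball_subset_ball_iff[of ?Z ?R 0 1] by (simp add: dist_norm)
  have nZ: "cmod ?Z = cmod (me (a,b,c,d)) / ms (a,b,c,d)"
  proof -
    define s where "s = ms (a,b,c,d)"
    have "s > 0" using sp s_def by simp
    then have "cmod (me (a,b,c,d) / complex_of_real s) = cmod (me (a,b,c,d)) / s"
      by (simp add: norm_divide)
    then show ?thesis unfolding mZ_def s_def .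
  qed
  show "cmod (me (a,b,c,d)) + cmod (a*d-b*c) \<le> ms (a,b,c,d)"
    using l1 sp unfolding nZ mR_def by (simp add: divide_simps add_divide_distrib[symmetric] split: if_splits)
  have "?R \<noteq> 1 \<or> ?Z \<noteq> 0" using ne by auto
  then have "?R < 1" using l1 by (smt (verit) norm_ge_zero norm_le_zero_iff)
  then show "cmod (a*d-b*c) < ms (a,b,c,d)" unfolding mR_def using sp by (simp add: divide_simps)
qed




declare ms.simps[simp del] me.simps[simp del] hA.simps[simp del]

lemma geo:
  fixes Z w :: complex
  assumes "cmod Z + R \<le> 1" "R < 1" "cmod w = 1" "cmod (w - Z) = R"
  shows "cmod Z + R = 1" "Z \<noteq> 0" "w = Z / complex_of_real (cmod Z)"
proof -
  have "cmod w \<le> cmod Z + cmod (w - Z)" by (rule norm_triangle_sub)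
  then show eq: "cmod Z + R = 1" using assms by simp
  then show Z0: "Z \<noteq> 0" using assms(2) by auto
  have "cmod (Z + (w - Z)) = cmod Z + cmod (w - Z)" using eq assms by simp
  then have "cmod Z *\<^sub>R (w - Z) = cmod (w - Z) *\<^sub>R Z" using norm_triangle_eq by blast
  then have "complex_of_real (cmod Z) * (w - Z) = complex_of_real R * Z"
    using assms(4) by (simp add: scaleR_conv_of_real)
  then have "complex_of_real (cmod Z) * w = complex_of_real (cmod Z + R) * Z"
    by (simp add: algebra_simps)
  then have "complex_of_real (cmod Z) * w = Z" using eq by simp
  then show "w = Z / complex_of_real (cmod Z)" using Z0 by (simp add: field_simps)
qed

lemma geo2:
  fixes Z :: complex
  assumes "cmod Z + R = 1" "Z \<noteq> 0" "R \<ge> 0"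
  shows "cmod (Z / complex_of_real (cmod Z)) = 1" "cmod (Z / complex_of_real (cmod Z) - Z) = R"
proof -
  show "cmod (Z / complex_of_real (cmod Z)) = 1" using assms by (simp add: norm_divide)
  have "Z / complex_of_real (cmod Z) - Z = complex_of_real (1 - cmod Z) * (Z / complex_of_real (cmod Z))"
    using assms(2) by (simp add: field_simps)
  moreover have "cmod (complex_of_real (1 - cmod Z)) = R" using assms by (simp only: norm_of_real)
  ultimately show "cmod (Z / complex_of_real (cmod Z) - Z) = R" using assms
    by (simp only: norm_mult norm_divide) simp
qed

lemma inv_pt:
  assumes ok: "mob_ok (a,b,c,d)" and np: "c*y + d \<noteq> 0" and fy: "mob_apply (a,b,c,d) (Some y) = Some w"
  shows "y = (d*w-b)/(a-c*w)" "a - c*w \<noteq> 0"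
proof -
  have w: "w = (a*y+b)/(c*y+d)" using fy np by simp
  have d0: "a*d-b*c \<noteq> 0" using ok by (simp add: mob_ok_def)
  show "a - c*w \<noteq> 0" unfolding w fwd_pt(2)[OF np] using d0 np by simp
  show "y = (d*w-b)/(a-c*w)" unfolding w fwd_pt[OF np] using d0 np by simp
qed

definition "bet0 m = me m / complex_of_real (cmod (me m))"
definition "alp0 m = (case m of (a,b,c,d) \<Rightarrow> (d * bet0 m - b) / (a - c * bet0 m))"

lemma ZR_conv:
  assumes sp: "ms (a,b,c,d) > 0"
  shows "cmod (mZ (a,b,c,d)) + mR (a,b,c,d) = (cmod (me (a,b,c,d)) + cmod (a*d-b*c)) / ms (a,b,c,d)"
    "mZ (a,b,c,d) / complex_of_real (cmod (mZ (a,b,c,d))) = bet0 (a,b,c,d)"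
proof -
  define s where "s = ms (a,b,c,d)"
  have s0: "s > 0" using sp s_def by simp
  have "cmod (me (a,b,c,d) / complex_of_real s) + cmod (a*d-b*c) / s = (cmod (me (a,b,c,d)) + cmod (a*d-b*c)) / s"
    using s0 by (simp add: norm_divide add_divide_distrib)
  then show "cmod (mZ (a,b,c,d)) + mR (a,b,c,d) = (cmod (me (a,b,c,d)) + cmod (a*d-b*c)) / ms (a,b,c,d)"
    unfolding mZ_def mR_def s_def by simp
  have "(me (a,b,c,d) / complex_of_real s) / complex_of_real (cmod (me (a,b,c,d) / complex_of_real s))
     = me (a,b,c,d) / complex_of_real (cmod (me (a,b,c,d)))"
    using s0 by (cases "me (a,b,c,d) = 0") (simp_all add: norm_divide field_simps)
  then show "mZ (a,b,c,d) / complex_of_real (cmod (mZ (a,b,c,d))) = bet0 (a,b,c,d)"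
    unfolding mZ_def bet0_def s_def by simp
qed

lemma circ_pt:
  assumes m: "(a,b,c,d) \<in> MD" and z: "cmod z = 1" and fz: "mob_apply (a,b,c,d) (Some z) \<in> Some ` sphere 0 1"
  shows "cmod (me (a,b,c,d)) + cmod (a*d-b*c) = ms (a,b,c,d)"
    "mob_apply (a,b,c,d) (Some z) = Some (bet0 (a,b,c,d))" "z = alp0 (a,b,c,d)"
proof -
  note P = MD_props[OF m]
  obtain w where w: "mob_apply (a,b,c,d) (Some z) = Some w" "cmod w = 1" using fz by auto
  have "Some w \<in> mob_apply (a,b,c,d) ` (Some ` sphere 0 1)" using w(1) z by (metis image_eqI mem_sphere_0)
  then have "w \<in> sphere (mZ (a,b,c,d)) (mR (a,b,c,d))" unfolding img_sphere[OF P(1) P(2)] by auto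
  then have wr: "cmod (w - mZ (a,b,c,d)) = mR (a,b,c,d)" by (simp add: dist_norm norm_minus_commute)
  have le: "cmod (mZ (a,b,c,d)) + mR (a,b,c,d) \<le> 1" unfolding ZR_conv(1)[OF P(2)] using P(2) P(3)
    by (simp add: divide_simps)
  have Rl: "mR (a,b,c,d) < 1" unfolding mR_def using P(2) P(4) by (simp add: divide_simps)
  note g = geo[OF le Rl w(2) wr]
  show "cmod (me (a,b,c,d)) + cmod (a*d-b*c) = ms (a,b,c,d)" using g(1) unfolding ZR_conv(1)[OF P(2)]
    using P(2) by (simp add: divide_simps)
  have wb: "w = bet0 (a,b,c,d)" using g(3) ZR_conv(2)[OF P(2)] by simp
  then show "mob_apply (a,b,c,d) (Some z) = Some (bet0 (a,b,c,d))" using w(1) by simp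
  have np: "c*z + d \<noteq> 0" using nopole[OF P(2)] z by simp
  show "z = alp0 (a,b,c,d)" using inv_pt(1)[OF P(1) np w(1)] wb by (simp add: alp0_def)
qed

lemma tangent_iff:
  assumes m: "(a,b,c,d) \<in> MD"
  shows "tangent (a,b,c,d) \<longleftrightarrow> cmod (me (a,b,c,d)) + cmod (a*d-b*c) = ms (a,b,c,d)"
proof
  assume "tangent (a,b,c,d)"
  then show "cmod (me (a,b,c,d)) + cmod (a*d-b*c) = ms (a,b,c,d)"
    unfolding tangent_def using circ_pt(1)[OF m] by blast
next
  assume eq: "cmod (me (a,b,c,d)) + cmod (a*d-b*c) = ms (a,b,c,d)"
  note P = MD_props[OF m]
  have e1: "cmod (mZ (a,b,c,d)) + mR (a,b,c,d) = 1" unfolding ZR_conv(1)[OF P(2)] eq using P(2) by simp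
  have Rl: "mR (a,b,c,d) < 1" unfolding mR_def using P(2) P(4) by (simp add: divide_simps)
  have Z0: "mZ (a,b,c,d) \<noteq> 0" using e1 Rl by auto
  have R0: "mR (a,b,c,d) \<ge> 0" unfolding mR_def using P(2) by simp
  note g = geo2[OF e1 Z0 R0]
  let ?w = "mZ (a,b,c,d) / complex_of_real (cmod (mZ (a,b,c,d)))"
  have "?w \<in> sphere (mZ (a,b,c,d)) (mR (a,b,c,d))" using g(2) by (simp add: dist_norm norm_minus_commute)
  then have "Some ?w \<in> mob_apply (a,b,c,d) ` (Some ` sphere 0 1)" unfolding img_sphere[OF P(1) P(2)] by simp
  then obtain z where z: "cmod z = 1" "mob_apply (a,b,c,d) (Some z) = Some ?w" by auto
  have "Some ?w \<in> Some ` sphere 0 1" using g(1) by simp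
  then have "cmod z = 1 \<and> mob_apply (a,b,c,d) (Some z) \<in> Some ` sphere 0 1" using z by simp
  then show "tangent (a,b,c,d)" unfolding tangent_def by blast
qed

lemma tangent_alpha:
  assumes m: "(a,b,c,d) \<in> MD" and t: "tangent (a,b,c,d)"
  shows "alpha (a,b,c,d) = alp0 (a,b,c,d)" "cmod (alp0 (a,b,c,d)) = 1"
    "mob_apply (a,b,c,d) (Some (alp0 (a,b,c,d))) = Some (bet0 (a,b,c,d))"
    "beta (a,b,c,d) = Some (bet0 (a,b,c,d))"
    "cmod (bet0 (a,b,c,d)) = 1"
proof -
  obtain z where z: "cmod z = 1" "mob_apply (a,b,c,d) (Some z) \<in> Some ` sphere 0 1"
    using t unfolding tangent_def by blast
  have za: "z = alp0 (a,b,c,d)" using circ_pt(3)[OF m z] .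
  have uniq: "\<And>y. cmod y = 1 \<and> mob_apply (a,b,c,d) (Some y) \<in> Some ` sphere 0 1 \<Longrightarrow> y = alp0 (a,b,c,d)"
    using circ_pt(3)[OF m] by blast
  have "(THE y. cmod y = 1 \<and> mob_apply (a,b,c,d) (Some y) \<in> Some ` sphere 0 1) = alp0 (a,b,c,d)"
  proof (rule the_equality)
    show "cmod (alp0 (a,b,c,d)) = 1 \<and> mob_apply (a,b,c,d) (Some (alp0 (a,b,c,d))) \<in> Some ` sphere 0 1"
      using z unfolding za by blast
  next
    fix y assume "cmod y = 1 \<and> mob_apply (a,b,c,d) (Some y) \<in> Some ` sphere 0 1"
    then show "y = alp0 (a,b,c,d)" using uniq by blast
  qed
  then show al: "alpha (a,b,c,d) = alp0 (a,b,c,d)" unfolding alpha_def using t by simp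
  show "cmod (alp0 (a,b,c,d)) = 1" using z(1) unfolding za .
  show fa: "mob_apply (a,b,c,d) (Some (alp0 (a,b,c,d))) = Some (bet0 (a,b,c,d))"
    using circ_pt(2)[OF m z] unfolding za .
  show "beta (a,b,c,d) = Some (bet0 (a,b,c,d))" unfolding beta_def al using t fa by simp
  obtain u where u: "mob_apply (a,b,c,d) (Some z) = Some u" "cmod u = 1" using z(2) by auto
  then show "cmod (bet0 (a,b,c,d)) = 1" using fa unfolding za by simp
qed

lemma nontangent_ab:
  assumes "\<not> tangent m"
  shows "alpha m = 0" "beta m = None"
  using assms by (simp_all add: alpha_def beta_def)




fun hrow :: "complex \<times> complex \<Rightarrow> real" where "hrow (p,q) = (cmod q)^2 - (cmod p)^2"
fun rmul :: "complex \<times> complex \<Rightarrow> mob \<Rightarrow> complex \<times> complex" where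
  "rmul (p,q) (a,b,c,d) = (p*a+q*c, p*b+q*d)"
definition hform :: "mob \<Rightarrow> complex \<times> complex \<Rightarrow> real" where
  "hform m w = hrow (rmul w m) - cmod (mdet m) * hrow w"

lemma hform_expand:
  "hform (a,b,c,d) (p,q) = (hA (a,b,c,d) + cmod (a*d-b*c)) * (cmod p)^2 + 2 * Re (me (a,b,c,d) * p * cnj q)
     + (ms (a,b,c,d) - cmod (a*d-b*c)) * (cmod q)^2"
proof -
  have "complex_of_real (hrow (p*a+q*c, p*b+q*d))
     = complex_of_real (hA (a,b,c,d) * (cmod p)^2 + 2 * Re (me (a,b,c,d) * p * cnj q) + ms (a,b,c,d) * (cmod q)^2)"
    unfolding hrow.simps hA.simps ms.simps me.simps of_real_diff of_real_add re2 unfolding of_real_mult of_real_diff nsq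
    by (simp add: algebra_simps)
  then have "hrow (p*a+q*c, p*b+q*d) = hA (a,b,c,d) * (cmod p)^2 + 2 * Re (me (a,b,c,d) * p * cnj q) + ms (a,b,c,d) * (cmod q)^2"
    using of_real_eq_iff by blast
  then show ?thesis unfolding hform_def by (simp add: algebra_simps)
qed

lemma psd:
  fixes A B :: real and x p q :: complex
  assumes "A \<ge> 0" "B \<ge> 0" "A * B \<ge> (cmod x)^2"
  shows "A * (cmod p)^2 + 2 * Re (x * p * cnj q) + B * (cmod q)^2 \<ge> 0"
proof -
  have re: "Re (x * p * cnj q) \<ge> - (cmod x * cmod p * cmod q)"
    using abs_Re_le_cmod[of "x * p * cnj q"] by (simp add: norm_mult)
  have "A * (cmod p)^2 - 2 * (cmod x * cmod p * cmod q) + B * (cmod q)^2 \<ge> 0"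
  proof (cases "A = 0")
    case True
    then have "cmod x = 0" using assms(3) by simp
    then show ?thesis using assms True by simp
  next
    case False
    then have A0: "A > 0" using assms(1) by simp
    have "A * (A * (cmod p)^2 - 2 * (cmod x * cmod p * cmod q) + B * (cmod q)^2)
       = (A * cmod p - cmod x * cmod q)^2 + (A*B - (cmod x)^2) * (cmod q)^2"
      by (simp add: power2_eq_square algebra_simps)
    also have "\<dots> \<ge> 0" using assms(3) by simp
    finally show ?thesis using A0 by (simp add: zero_le_mult_iff)
  qed
  then show ?thesis using re by linarith
qed

lemma hform_MD:
  assumes m: "(a,b,c,d) \<in> MD"
  shows "hform (a,b,c,d) w \<ge> 0"
    "\<not> tangent (a,b,c,d) \<Longrightarrow> \<exists>\<epsilon>>0. \<forall>w. hform (a,b,c,d) w \<ge> \<epsilon> * hrow w"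
    "tangent (a,b,c,d) \<Longrightarrow> hform (a,b,c,d) (p,q) = cmod (me (a,b,c,d)) * (cmod (p * bet0 (a,b,c,d) + q))^2"
    "tangent (a,b,c,d) \<Longrightarrow> cmod (me (a,b,c,d)) > 0"
proof -
  note P = MD_props[OF m]
  define s where "s = ms (a,b,c,d)"
  define E where "E = cmod (me (a,b,c,d))"
  define D where "D = cmod (a*d-b*c)"
  define H1 where "H1 = hA (a,b,c,d) + D"
  define H2 where "H2 = s - D"
  have s0: "s > 0" using P(2) s_def by simp
  have D0: "D > 0" using P(1) unfolding D_def by (simp add: mob_ok_def)
  have ED: "E + D \<le> s" using P(3) unfolding E_def D_def s_def .
  have Ds: "D < s" using P(4) unfolding D_def s_def .
  have E0: "E \<ge> 0" unfolding E_def by simp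
  have key: "hA (a,b,c,d) * s = E^2 - D^2"
    using key_id[of b a d c] unfolding s_def E_def D_def by (simp add: hA.simps ms.simps me.simps)
  have HE: "hform (a,b,c,d) (p,q) = H1 * (cmod p)^2 + 2 * Re (me (a,b,c,d) * p * cnj q) + H2 * (cmod q)^2" for p q
    unfolding hform_expand H1_def H2_def D_def s_def ..
  have sH1: "s * H1 = E^2 - D^2 + D * s" unfolding H1_def using key by (simp add: algebra_simps)
  have H1n: "H1 \<ge> 0"
  proof -
    have "E^2 - D^2 + D * s \<ge> E^2 - D^2 + D * (E + D)" using ED D0 by (simp add: mult_left_mono)
    moreover have "E^2 - D^2 + D * (E + D) = E * (E + D)" by (simp add: power2_eq_square algebra_simps)
    moreover have "E * (E + D) \<ge> 0" using E0 D0 by simp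
    ultimately have "s * H1 \<ge> 0" using sH1 by linarith
    then show ?thesis using s0 by (simp add: zero_le_mult_iff)
  qed
  have H2p: "H2 > 0" unfolding H2_def using Ds by simp
  have detid: "s * (H1 * H2 - E^2) = D * ((s - D)^2 - E^2)"
  proof -
    have "s * (H1 * H2 - E^2) = (s * H1) * H2 - s * E^2" by (simp add: algebra_simps)
    also have "\<dots> = (E^2 - D^2 + D * s) * (s - D) - s * E^2" unfolding sH1 H2_def ..
    also have "\<dots> = D * ((s - D)^2 - E^2)" by (simp add: power2_eq_square algebra_simps)
    finally show ?thesis .
  qed
  have sDE: "s - D \<ge> E" using ED by simp
  then have sq: "(s - D)^2 \<ge> E^2" using E0 by (simp add: power_mono)
  have det0: "H1 * H2 - E^2 \<ge> 0"
  proof -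
    have "D * ((s - D)^2 - E^2) \<ge> 0" using D0 sq by simp
    then have "s * (H1 * H2 - E^2) \<ge> 0" using detid by simp
    then show ?thesis using s0 by (simp add: zero_le_mult_iff)
  qed
  show "hform (a,b,c,d) w \<ge> 0"
  proof (cases w)
    case (Pair p q)
    show ?thesis unfolding Pair HE using psd[OF H1n less_imp_le[OF H2p], of "me (a,b,c,d)" p q] det0
      unfolding E_def by simp
  qed
  have tiff: "tangent (a,b,c,d) \<longleftrightarrow> E + D = s" using tangent_iff[OF m] unfolding E_def D_def s_def .
  show "\<not> tangent (a,b,c,d) \<Longrightarrow> \<exists>\<epsilon>>0. \<forall>w. hform (a,b,c,d) w \<ge> \<epsilon> * hrow w"
  proof -
    assume "\<not> tangent (a,b,c,d)"
    then have lt: "E + D < s" using tiff ED by simp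
    then have "s - D > E" by simp
    then have "(s - D)^2 > E^2" using E0 by (simp add: power_strict_mono)
    then have "D * ((s - D)^2 - E^2) > 0" using D0 by simp
    then have "s * (H1 * H2 - E^2) > 0" using detid by simp
    then have X0: "H1 * H2 - E^2 > 0" using s0 by (simp add: zero_less_mult_iff)
    define X where "X = H1 * H2 - E^2"
    define \<epsilon> where "\<epsilon> = X / (H1 + H2)"
    have sum0: "H1 + H2 > 0" using H1n H2p by simp
    have e0: "\<epsilon> > 0" unfolding \<epsilon>_def X_def using X0 sum0 by simp
    have "X \<le> H1 * H2" unfolding X_def by simp
    also have "\<dots> \<le> H1 * (H1 + H2)" using H1n H2p by (simp add: mult_left_mono)
    finally have "\<epsilon> \<le> H1" unfolding \<epsilon>_def using sum0 by (simp add: divide_simps mult.commute)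
    then have A0: "H1 - \<epsilon> \<ge> 0" by simp
    have "X \<le> H1 * H2" unfolding X_def by simp
    also have "\<dots> \<le> H2 * (H1 + H2)" using H1n H2p by (simp add: algebra_simps)
    finally have "\<epsilon> \<le> H2" unfolding \<epsilon>_def using sum0 by (simp add: divide_simps mult.commute)
    then have B0: "H2 - \<epsilon> \<ge> 0" by simp
    have "(H1 - \<epsilon>) * (H2 - \<epsilon>) = H1 * H2 - \<epsilon> * (H1 + H2) + \<epsilon>^2"
      by (simp add: power2_eq_square algebra_simps)
    also have "\<epsilon> * (H1 + H2) = X" unfolding \<epsilon>_def using sum0 by simp
    finally have "(H1 - \<epsilon>) * (H2 - \<epsilon>) = E^2 + \<epsilon>^2" unfolding X_def by simp
    then have AB: "(H1 - \<epsilon>) * (H2 - \<epsilon>) \<ge> (cmod (me (a,b,c,d)))^2" unfolding E_def by simp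
    have "hform (a,b,c,d) w \<ge> \<epsilon> * hrow w" for w
    proof (cases w)
      case (Pair p q)
      have "(H1 - \<epsilon>) * (cmod p)^2 + 2 * Re (me (a,b,c,d) * p * cnj q) + (H2 - \<epsilon>) * (cmod q)^2 \<ge> 0"
        by (rule psd[OF A0 B0 AB])
      then have "hform (a,b,c,d) (p,q) \<ge> \<epsilon> * ((cmod p)^2 + (cmod q)^2)" unfolding HE
        by (simp add: algebra_simps)
      moreover have "\<epsilon> * ((cmod p)^2 + (cmod q)^2) \<ge> \<epsilon> * hrow (p,q)" using e0
        by (simp add: mult_left_mono)
      ultimately show ?thesis unfolding Pair by linarith
    qed
    then show ?thesis using e0 by blast
  qed
  show "tangent (a,b,c,d) \<Longrightarrow> cmod (me (a,b,c,d)) > 0"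
  proof -
    assume "tangent (a,b,c,d)"
    then have "E + D = s" using tiff by simp
    then have "E > 0" using Ds by linarith
    then show ?thesis unfolding E_def .
  qed
  show "tangent (a,b,c,d) \<Longrightarrow> hform (a,b,c,d) (p,q) = cmod (me (a,b,c,d)) * (cmod (p * bet0 (a,b,c,d) + q))^2"
  proof -
    assume t: "tangent (a,b,c,d)"
    then have eq: "E + D = s" using tiff by simp
    then have Ep: "E > 0" using Ds by simp
    have h2: "H2 = E" unfolding H2_def using eq by simp
    have "s * H1 = s * E" unfolding sH1 using eq[symmetric] by (simp add: power2_eq_square algebra_simps)
    then have h1: "H1 = E" using s0 by simp
    have "complex_of_real (E * (cmod p)^2 + 2 * Re (me (a,b,c,d) * p * cnj q) + E * (cmod q)^2)
        = complex_of_real (E * (cmod (p * bet0 (a,b,c,d) + q))^2)"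
    proof -
      have ee: "me (a,b,c,d) * cnj (me (a,b,c,d)) = complex_of_real E * complex_of_real E"
        unfolding E_def nsq[symmetric] by (simp add: power2_eq_square)
      have En: "complex_of_real E \<noteq> 0" using Ep by simp
      show ?thesis
        unfolding of_real_add re2 unfolding of_real_mult nsq bet0_def E_def[symmetric]
        using En ee by (simp add: field_simps)
    qed
    then show ?thesis unfolding HE h1 h2 E_def using of_real_eq_iff by blast
  qed
qed




lemma nested_balls:
  fixes Z :: "nat \<Rightarrow> complex" and \<rho> :: "nat \<Rightarrow> real"
  assumes sub: "\<And>n. cball (Z (Suc n)) (\<rho> (Suc n)) \<subseteq> cball (Z n) (\<rho> n)"
    and lb: "\<And>n. \<rho> n \<ge> r0" and r0: "r0 > 0"
  shows "\<exists>c r. r > 0 \<and> (\<Inter>n\<in>{1..}. cball (Z n) (\<rho> n)) = cball c r"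
proof -
  have st: "dist (Z (Suc n)) (Z n) + \<rho> (Suc n) \<le> \<rho> n" for n
    using sub[of n] cball_subset_cball_iff lb[of "Suc n"] r0 by fastforce
  have dec: "decseq \<rho>" unfolding decseq_Suc_iff using st by (smt (verit) zero_le_dist)
  have dd: "dist (Z m) (Z n) \<le> \<rho> n - \<rho> m" if "n \<le> m" for n m
    using that
  proof (induction m rule: dec_induct)
    case base then show ?case by simp
  next
    case (step k)
    have "dist (Z (Suc k)) (Z n) \<le> dist (Z (Suc k)) (Z k) + dist (Z k) (Z n)" by (rule dist_triangle)
    then show ?case using step st[of k] by linarith
  qed
  obtain r where rl: "\<rho> \<longlonglongrightarrow> r" and rle: "\<forall>i. r \<le> \<rho> i"
    using decseq_convergent[OF dec, of r0] lb by blast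
  have rr0: "r \<ge> r0" using LIMSEQ_le_const[OF rl] lb by blast
  have cau: "Cauchy Z"
  proof (rule CauchyI)
    fix e :: real assume e: "e > 0"
    obtain N where N: "\<forall>n\<ge>N. dist (\<rho> n) r < e" using rl e unfolding lim_sequentially by blast
    show "\<exists>M. \<forall>m\<ge>M. \<forall>n\<ge>M. norm (Z m - Z n) < e"
    proof (intro exI allI impI)
      fix m n assume mn: "m \<ge> N" "n \<ge> N"
      have rN: "\<rho> N - r < e" using N rle by (simp add: dist_real_def)
      show "norm (Z m - Z n) < e"
      proof (cases "n \<le> m")
        case True
        have "dist (Z m) (Z n) \<le> \<rho> n - \<rho> m" using dd[OF True] .
        also have "\<dots> \<le> \<rho> N - r" using dec mn rle unfolding decseq_def by (smt (verit))
        finally show ?thesis using rN by (simp add: dist_norm)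
      next
        case False
        have "dist (Z n) (Z m) \<le> \<rho> m - \<rho> n" using dd False by simp
        also have "\<dots> \<le> \<rho> N - r" using dec mn rle unfolding decseq_def by (smt (verit))
        finally show ?thesis using rN by (simp add: dist_norm norm_minus_commute)
      qed
    qed
  qed
  then obtain c where cl: "Z \<longlonglongrightarrow> c" using Cauchy_convergent_iff convergent_def by blast
  have dc: "dist c (Z n) \<le> \<rho> n - r" for n
  proof -
    have l1: "(\<lambda>m. dist (Z m) (Z n)) \<longlonglongrightarrow> dist c (Z n)" using cl by (intro tendsto_intros)
    have l2: "(\<lambda>m. \<rho> n - \<rho> m) \<longlonglongrightarrow> \<rho> n - r" using rl by (intro tendsto_intros)
    show ?thesis using LIMSEQ_le[OF l1 l2] dd by blast
  qed
  have "(\<Inter>n\<in>{1..}. cball (Z n) (\<rho> n)) = cball c r"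
  proof (intro equalityI subsetI)
    fix x assume x: "x \<in> (\<Inter>n\<in>{1..}. cball (Z n) (\<rho> n))"
    have l1: "(\<lambda>n. dist (Z n) x) \<longlonglongrightarrow> dist c x" using cl by (intro tendsto_intros)
    have "\<forall>n\<ge>1. dist (Z n) x \<le> \<rho> n" using x by auto
    then have "dist c x \<le> r" using LIMSEQ_le[OF l1 rl] by blast
    then show "x \<in> cball c r" by simp
  next
    fix x assume x: "x \<in> cball c r"
    have "dist (Z n) x \<le> \<rho> n" for n
    proof -
      have "dist (Z n) x \<le> dist (Z n) c + dist c x" by (rule dist_triangle)
      then show ?thesis using dc[of n] x by (simp add: dist_commute)
    qed
    then show "x \<in> (\<Inter>n\<in>{1..}. cball (Z n) (\<rho> n))" by simp
  qed
  then show ?thesis using rr0 r0 by (intro exI[of _ c] exI[of _ r]) simp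
qed




fun mmul :: "mob \<Rightarrow> mob \<Rightarrow> mob" where
  "mmul (a1,b1,c1,d1) (a2,b2,c2,d2) = (a1*a2+b1*c2, a1*b2+b1*d2, c1*a2+d1*c2, c1*b2+d1*d2)"
fun Pm :: "(nat \<Rightarrow> mob) \<Rightarrow> nat \<Rightarrow> mob" where
  "Pm f 0 = (1,0,0,1)"
| "Pm f (Suc n) = mmul (Pm f n) (f (Suc n))"
fun row :: "mob \<Rightarrow> complex \<times> complex" where "row (a,b,c,d) = (c,d)"

lemma mdet_mmul: "mdet (mmul m1 m2) = mdet m1 * mdet m2"
  by (cases m1; cases m2) (simp add: algebra_simps)

lemma row_mmul: "row (mmul m1 m2) = rmul (row m1) m2"
  by (cases m1; cases m2) (simp add: algebra_simps)

lemma ms_row: "ms m = hrow (row m)"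
  by (cases m) (simp add: ms.simps)

lemma comp_apply:
  assumes "mob_apply m2 (Some z) = Some y" "mob_apply m1 (Some y) = Some x"
  shows "mob_apply (mmul m1 m2) (Some z) = Some x"
proof -
  obtain a1 b1 c1 d1 where m1: "m1 = (a1,b1,c1,d1)" by (cases m1) auto
  obtain a2 b2 c2 d2 where m2: "m2 = (a2,b2,c2,d2)" by (cases m2) auto
  have n2: "c2*z+d2 \<noteq> 0" and y: "y = (a2*z+b2)/(c2*z+d2)" using assms(1) unfolding m2 by (auto split: if_splits)
  have n1: "c1*y+d1 \<noteq> 0" and x: "x = (a1*y+b1)/(c1*y+d1)" using assms(2) unfolding m1 by (auto split: if_splits)
  have den: "(c1*a2+d1*c2)*z + (c1*b2+d1*d2) = (c2*z+d2) * (c1*y+d1)"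
    unfolding y using n2 by (simp add: field_simps)
  have num: "(a1*a2+b1*c2)*z + (a1*b2+b1*d2) = (c2*z+d2) * (a1*y+b1)"
    unfolding y using n2 by (simp add: field_simps)
  show ?thesis unfolding m1 m2 using den num n1 n2 x by simp
qed

lemma img_cball_gen:
  assumes "mob_ok m" "ms m > 0"
  shows "mob_apply m ` cdisc = Some ` cball (mZ m) (mR m)"
  using img_cball assms by (cases m) auto

lemma MD_cdisc:
  assumes m: "m \<in> MD" and z: "cmod z \<le> 1"
  obtains y where "mob_apply m (Some z) = Some y" "cmod y \<le> 1"
proof -
  obtain a b c d where md: "m = (a,b,c,d)" by (cases m) auto
  note P = MD_props[OF m[unfolded md]]
  have "mob_apply m (Some z) \<in> mob_apply m ` cdisc" using z by simp
  then have "mob_apply m (Some z) \<in> Some ` cball (mZ m) (mR m)" using img_cball_gen P(1,2) md by simp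
  then obtain y where y: "mob_apply m (Some z) = Some y" "dist (mZ m) y \<le> mR m" by auto
  have "cmod (mZ m) + mR m \<le> 1" unfolding md ZR_conv(1)[OF P(2)] using P(2) P(3) by (simp add: divide_simps)
  moreover have "cmod y \<le> cmod (mZ m) + dist (mZ m) y"
    by (metis dist_0_norm dist_commute dist_triangle)
  ultimately have "cmod y \<le> 1" using y(2) by linarith
  then show ?thesis using that y(1) by blast
qed

definition "Dn f n = cmod (mdet (Pm f n))"
definition "gs f n = hrow (row (Pm f n)) / Dn f n"

context
  fixes f :: "nat \<Rightarrow> mob"
  assumes fMD: "\<forall>n\<ge>1. f n \<in> MD"
begin

lemma fMD': "f (Suc n) \<in> MD" using fMD by simp

lemma det_f: "cmod (mdet (f (Suc n))) > 0"
proof -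
  obtain a b c d where md: "f (Suc n) = (a,b,c,d)" by (cases "f (Suc n)") auto
  show ?thesis using MD_props(1)[OF fMD'[of n, unfolded md]] md by (simp add: mob_ok_def)
qed

lemma Dn_Suc: "Dn f (Suc n) = Dn f n * cmod (mdet (f (Suc n)))"
  unfolding Dn_def by (simp add: mdet_mmul norm_mult)

lemma Dn_pos: "Dn f n > 0"
proof (induction n)
  case 0 then show ?case by (simp add: Dn_def mdet.simps)
next
  case (Suc n) then show ?case unfolding Dn_Suc using det_f[of n] by simp
qed

lemma hform_f_nonneg: "hform (f (Suc n)) w \<ge> 0"
proof -
  obtain a b c d where md: "f (Suc n) = (a,b,c,d)" by (cases "f (Suc n)") auto
  show ?thesis using hform_MD(1)[OF fMD'[of n, unfolded md]] md by simp
qed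

lemma gs_step: "gs f (Suc n) = gs f n + hform (f (Suc n)) (row (Pm f n)) / Dn f (Suc n)"
proof -
  have "hrow (row (Pm f (Suc n))) = hform (f (Suc n)) (row (Pm f n)) + cmod (mdet (f (Suc n))) * hrow (row (Pm f n))"
    by (simp add: row_mmul hform_def)
  then show ?thesis unfolding gs_def Dn_Suc using Dn_pos[of n] det_f[of n]
    by (simp add: field_simps)
qed

lemma gs_0: "gs f 0 = 1" unfolding gs_def Dn_def by (simp add: mdet.simps)

lemma gs_mono_Suc: "gs f n \<le> gs f (Suc n)"
  unfolding gs_step using hform_f_nonneg[of n] Dn_pos[of "Suc n"] by simp

lemma gs_mono: "mono (gs f)" using gs_mono_Suc by (simp add: mono_iff_le_Suc)

lemma gs_ge1: "gs f n \<ge> 1" using gs_mono gs_0 by (metis le0 monoD)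

lemma ms_P: "ms (Pm f n) > 0"
proof -
  have "ms (Pm f n) = gs f n * Dn f n" unfolding ms_row gs_def using Dn_pos[of n] by simp
  then show ?thesis using gs_ge1[of n] Dn_pos[of n] by simp
qed

lemma ok_P: "mob_ok (Pm f n)"
  using Dn_pos[of n] unfolding Dn_def by (cases "Pm f n") (simp add: mob_ok_def)

lemma nopole_P: "cmod z \<le> 1 \<Longrightarrow> \<exists>x. mob_apply (Pm f n) (Some z) = Some x"
proof -
  assume z: "cmod z \<le> 1"
  obtain a b c d where md: "Pm f n = (a,b,c,d)" by (cases "Pm f n") auto
  have "c*z + d \<noteq> 0" using nopole[OF ms_P[of n, unfolded md] z] .
  then show ?thesis unfolding md by simp
qed

lemma comp_eq: "cmod z \<le> 1 \<Longrightarrow> comp_seq f n (Some z) = mob_apply (Pm f n) (Some z)"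
proof (induction n arbitrary: z)
  case 0 then show ?case by (simp add: mdet.simps)
next
  case (Suc n)
  obtain y where y: "mob_apply (f (Suc n)) (Some z) = Some y" "cmod y \<le> 1"
    using MD_cdisc[OF fMD' Suc.prems] by blast
  obtain x where x: "mob_apply (Pm f n) (Some y) = Some x" using nopole_P[OF y(2)] by blast
  have "comp_seq f (Suc n) (Some z) = comp_seq f n (Some y)" using y(1) by simp
  also have "\<dots> = Some x" using Suc.IH[OF y(2)] x by simp
  also have "\<dots> = mob_apply (Pm f (Suc n)) (Some z)" using comp_apply[OF y(1) x] by simp
  finally show ?case .
qed

lemma img_seq: "comp_seq f n ` cdisc = Some ` cball (mZ (Pm f n)) (1 / gs f n)"
proof -
  have "comp_seq f n ` cdisc = mob_apply (Pm f n) ` cdisc"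
    by (rule image_cong) (auto simp: comp_eq)
  also have "\<dots> = Some ` cball (mZ (Pm f n)) (mR (Pm f n))" by (rule img_cball_gen[OF ok_P ms_P])
  also have "mR (Pm f n) = 1 / gs f n" unfolding mR_def gs_def ms_row Dn_def by simp
  finally show ?thesis .
qed

lemma seq_nested: "comp_seq f (Suc n) ` cdisc \<subseteq> comp_seq f n ` cdisc"
proof
  fix x assume "x \<in> comp_seq f (Suc n) ` cdisc"
  then obtain z where z: "cmod z \<le> 1" "x = comp_seq f (Suc n) (Some z)" by auto
  obtain y where y: "mob_apply (f (Suc n)) (Some z) = Some y" "cmod y \<le> 1"
    using MD_cdisc[OF fMD' z(1)] by blast
  have "x = comp_seq f n (Some y)" using z(2) y(1) by simp
  then show "x \<in> comp_seq f n ` cdisc" using y(2) by simp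
qed

lemma ldt_iff: "limit_disc_type f \<longleftrightarrow> (\<exists>B. \<forall>n. gs f n \<le> B)"
proof
  assume "limit_disc_type f"
  then obtain c r where r: "r > 0" and eq: "(\<Inter>n\<in>{1..}. comp_seq f n ` cdisc) = Some ` cball c r"
    unfolding limit_disc_type_def by blast
  have "gs f n \<le> max 1 (1/r)" for n
  proof (cases "n = 0")
    case True then show ?thesis using gs_0 by simp
  next
    case False
    then have "n \<in> {1..}" by simp
    then have "(\<Inter>n\<in>{1..}. comp_seq f n ` cdisc) \<subseteq> comp_seq f n ` cdisc" by blast
    then have "Some ` cball c r \<subseteq> comp_seq f n ` cdisc" using eq by simp
    then have "Some ` cball c r \<subseteq> Some ` cball (mZ (Pm f n)) (1 / gs f n)" unfolding img_seq .
    then have "cball c r \<subseteq> cball (mZ (Pm f n)) (1 / gs f n)" by (simp add: inj_image_subset_iff)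
    then have "dist c (mZ (Pm f n)) + r \<le> 1 / gs f n \<or> r < 0" by (simp only: cball_subset_cball_iff)
    then have "r \<le> 1 / gs f n" using r zero_le_dist[of c "mZ (Pm f n)"] by linarith
    then have "gs f n \<le> 1 / r" using r gs_ge1[of n] by (simp add: field_simps)
    then show ?thesis by simp
  qed
  then show "\<exists>B. \<forall>n. gs f n \<le> B" by blast
next
  assume "\<exists>B. \<forall>n. gs f n \<le> B"
  then obtain B where B: "\<And>n. gs f n \<le> B" by blast
  have B1: "B \<ge> 1" using B[of 0] gs_0 by simp
  have sub: "cball (mZ (Pm f (Suc n))) (1 / gs f (Suc n)) \<subseteq> cball (mZ (Pm f n)) (1 / gs f n)" for n
    using seq_nested[of n] unfolding img_seq by (simp add: inj_image_subset_iff)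
  have lb: "1 / gs f n \<ge> 1 / B" for n using B[of n] gs_ge1[of n] by (simp add: frac_le)
  obtain c r where cr: "r > 0" "(\<Inter>n\<in>{1..}. cball (mZ (Pm f n)) (1 / gs f n)) = cball c r"
    using nested_balls[where Z="\<lambda>n. mZ (Pm f n)" and \<rho>="\<lambda>n. 1 / gs f n", OF sub lb] B1 by auto
  have "(\<Inter>n\<in>{1..}. comp_seq f n ` cdisc) = (\<Inter>n\<in>{1..}. Some ` cball (mZ (Pm f n)) (1 / gs f n))"
    unfolding img_seq ..
  also have "\<dots> = Some ` (\<Inter>n\<in>{1..}. cball (mZ (Pm f n)) (1 / gs f n))"
    by (rule image_INT[symmetric]) auto
  finally show "limit_disc_type f" unfolding limit_disc_type_def using cr by auto
qed

end



lemma two_lin: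
  fixes \<beta> y p q :: complex
  assumes "\<beta> \<noteq> y" "cmod \<beta> = 1"
  shows "hrow (p,q) \<le> (2 + 2 / (cmod (\<beta> - y))^2) * ((cmod (p*\<beta>+q))^2 + (cmod (p*y+q))^2)"
proof -
  define L1 where "L1 = cmod (p*\<beta>+q)"
  define L2 where "L2 = cmod (p*y+q)"
  define k where "k = cmod (\<beta> - y)"
  have k0: "k > 0" unfolding k_def using assms by simp
  have sq2: "(x + z)^2 \<le> 2 * (x^2 + z^2)" for x z :: real
  proof -
    have "0 \<le> (x - z)^2" by simp
    then show ?thesis by (simp add: power2_eq_square algebra_simps)
  qed
  have "p * (\<beta> - y) = (p*\<beta>+q) - (p*y+q)" by (simp add: algebra_simps)
  then have "cmod p * k \<le> L1 + L2" unfolding k_def L1_def L2_def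
    by (metis norm_mult norm_triangle_ineq4)
  then have "(cmod p * k)^2 \<le> (L1 + L2)^2" by (rule power_mono) (use k0 in simp)
  also have "\<dots> \<le> 2 * (L1^2 + L2^2)" by (rule sq2)
  finally have pk: "(cmod p)^2 * k^2 \<le> 2 * (L1^2 + L2^2)" by (simp add: power_mult_distrib)
  then have pb: "(cmod p)^2 \<le> 2 * (L1^2 + L2^2) / k^2" using k0 by (simp add: field_simps)
  have "q = (p*\<beta>+q) - p*\<beta>" by simp
  then have "cmod q \<le> L1 + cmod (p*\<beta>)" unfolding L1_def by (metis norm_triangle_ineq4)
  then have "cmod q \<le> L1 + cmod p" using assms(2) by (simp add: norm_mult)
  then have "(cmod q)^2 \<le> (L1 + cmod p)^2" by (simp add: power_mono)
  also have "\<dots> \<le> 2 * (L1^2 + (cmod p)^2)" by (rule sq2)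
  finally have qb: "(cmod q)^2 \<le> 2 * (L1^2 + (cmod p)^2)" .
  have "hrow (p,q) \<le> 2 * L1^2 + (cmod p)^2" using qb by simp
  also have "\<dots> \<le> 2 * L1^2 + 2 * (L1^2 + L2^2) / k^2" using pb by simp
  also have "\<dots> \<le> (2 + 2 / k^2) * (L1^2 + L2^2)"
  proof -
    have "2 * L1^2 \<le> 2 * (L1^2 + L2^2)" by simp
    then show ?thesis by (simp add: algebra_simps add_divide_distrib)
  qed
  finally show ?thesis unfolding L1_def L2_def k_def .
qed

definition "Phi2 m1 m2 w = hform m1 w / cmod (mdet m1) + hform m2 (rmul w m1) / (cmod (mdet m1) * cmod (mdet m2))"

lemma mdet_pos_MD: "m \<in> MD \<Longrightarrow> cmod (mdet m) > 0"
  by (cases m) (simp add: MD_def mob_ok_def)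

lemma hform_nn: "m \<in> MD \<Longrightarrow> hform m w \<ge> 0"
  by (cases m) (use hform_MD(1) in blast)

lemma hform_nt: "m \<in> MD \<Longrightarrow> \<not> tangent m \<Longrightarrow> \<exists>\<epsilon>>0. \<forall>w. hform m w \<ge> \<epsilon> * hrow w"
  by (cases m) (use hform_MD(2) in blast)

lemma hrow_rmul: "hrow (rmul w m) = hform m w + cmod (mdet m) * hrow w"
  unfolding hform_def by simp

lemma pair_bound:
  assumes m1: "m1 \<in> MD" and m2: "m2 \<in> MD" and bad: "Some (alpha m1) \<noteq> beta m2"
  shows "\<exists>\<epsilon>>0. \<forall>w. Phi2 m1 m2 w \<ge> \<epsilon> * hrow w"
proof -
  define D1 where "D1 = cmod (mdet m1)"
  define D2 where "D2 = cmod (mdet m2)"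
  have D1: "D1 > 0" unfolding D1_def using mdet_pos_MD[OF m1] .
  have D2: "D2 > 0" unfolding D2_def using mdet_pos_MD[OF m2] .
  have PH: "Phi2 m1 m2 w = hform m1 w / D1 + hform m2 (rmul w m1) / (D1 * D2)" for w
    unfolding Phi2_def D1_def D2_def ..
  show ?thesis
  proof (cases "tangent m2")
    case False
    obtain \<epsilon> where e: "\<epsilon> > 0" "\<And>w. hform m2 w \<ge> \<epsilon> * hrow w" using hform_nt[OF m2 False] by blast
    have "Phi2 m1 m2 w \<ge> (\<epsilon> / D2) * hrow w" for w
    proof -
      have "hform m2 (rmul w m1) \<ge> \<epsilon> * hrow (rmul w m1)" by (rule e(2))
      also have "\<epsilon> * hrow (rmul w m1) \<ge> \<epsilon> * (D1 * hrow w)" unfolding hrow_rmul D1_def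
        using hform_nn[OF m1, of w] e(1) by (simp add: mult_left_mono)
      finally have "\<epsilon> * (D1 * hrow w) \<le> hform m2 (rmul w m1)" .
      then have "\<epsilon> * (D1 * hrow w) / (D1 * D2) \<le> hform m2 (rmul w m1) / (D1 * D2)"
        by (rule divide_right_mono) (use D1 D2 in simp)
      then have "hform m2 (rmul w m1) / (D1 * D2) \<ge> \<epsilon> * (D1 * hrow w) / (D1 * D2)" by simp
      also have "\<epsilon> * (D1 * hrow w) / (D1 * D2) = (\<epsilon> / D2) * hrow w" using D1 by simp
      finally have "(\<epsilon> / D2) * hrow w \<le> hform m2 (rmul w m1) / (D1 * D2)" .
      moreover have "hform m1 w / D1 \<ge> 0" using hform_nn[OF m1, of w] D1 by simp
      ultimately show ?thesis unfolding PH by linarith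
    qed
    then show ?thesis using e(1) D2 by (intro exI[of _ "\<epsilon> / D2"]) simp
  next
    case t2: True
    show ?thesis
    proof (cases "tangent m1")
      case False
      obtain \<epsilon> where e: "\<epsilon> > 0" "\<And>w. hform m1 w \<ge> \<epsilon> * hrow w" using hform_nt[OF m1 False] by blast
      have "Phi2 m1 m2 w \<ge> (\<epsilon> / D1) * hrow w" for w
      proof -
        have "hform m1 w / D1 \<ge> \<epsilon> * hrow w / D1" using e(2)[of w] D1 by (simp add: divide_right_mono)
        moreover have "hform m2 (rmul w m1) / (D1 * D2) \<ge> 0" using hform_nn[OF m2] D1 D2 by simp
        ultimately show ?thesis unfolding PH by simp
      qed
      then show ?thesis using e(1) D1 by (intro exI[of _ "\<epsilon> / D1"]) simp
    next
      case t1: True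
      obtain a1 b1 c1 d1 where M1: "m1 = (a1,b1,c1,d1)" by (cases m1) auto
      obtain a2 b2 c2 d2 where M2: "m2 = (a2,b2,c2,d2)" by (cases m2) auto
      note T1 = tangent_alpha[OF m1[unfolded M1] t1[unfolded M1]]
      note T2 = tangent_alpha[OF m2[unfolded M2] t2[unfolded M2]]
      define \<beta>1 where "\<beta>1 = bet0 m1"
      define \<beta>2 where "\<beta>2 = bet0 m2"
      define E1 where "E1 = cmod (me m1)"
      define E2 where "E2 = cmod (me m2)"
      have E1: "E1 > 0" unfolding E1_def M1 using hform_MD(4)[OF m1[unfolded M1] t1[unfolded M1]] .
      have E2: "E2 > 0" unfolding E2_def M2 using hform_MD(4)[OF m2[unfolded M2] t2[unfolded M2]] .
      have hf1: "hform m1 (p,q) = E1 * (cmod (p*\<beta>1+q))^2" for p q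
        unfolding E1_def \<beta>1_def M1 using hform_MD(3)[OF m1[unfolded M1] t1[unfolded M1]] .
      have hf2: "hform m2 (p,q) = E2 * (cmod (p*\<beta>2+q))^2" for p q
        unfolding E2_def \<beta>2_def M2 using hform_MD(3)[OF m2[unfolded M2] t2[unfolded M2]] .
      have b1u: "cmod \<beta>1 = 1" unfolding \<beta>1_def M1 using T1(5) .
      have b2u: "cmod \<beta>2 = 1" unfolding \<beta>2_def M2 using T2(5) .
      have ne: "alp0 m1 \<noteq> \<beta>2" using bad T2(4) T1(1) unfolding \<beta>2_def M1 M2 by auto
      have sp1: "ms (a1,b1,c1,d1) > 0" using MD_props(2)[OF m1[unfolded M1]] .
      have ok1: "mob_ok (a1,b1,c1,d1)" using MD_props(1)[OF m1[unfolded M1]] .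
      have np: "c1*\<beta>2 + d1 \<noteq> 0" using nopole[OF sp1] b2u by simp
      define y where "y = (a1*\<beta>2+b1)/(c1*\<beta>2+d1)"
      have fy: "mob_apply (a1,b1,c1,d1) (Some \<beta>2) = Some y" unfolding y_def using np by simp
      have yne: "y \<noteq> \<beta>1"
      proof
        assume "y = \<beta>1"
        have "\<beta>2 = (d1*y-b1)/(a1-c1*y)" using inv_pt(1)[OF ok1 np fy] .
        also have "\<dots> = alp0 m1" unfolding \<open>y = \<beta>1\<close> \<beta>1_def M1 alp0_def by simp
        finally show False using ne by simp
      qed
      define \<kappa> where "\<kappa> = min (E1 / D1) (E2 * (cmod (c1*\<beta>2+d1))^2 / (D1 * D2))"
      have k0: "\<kappa> > 0" unfolding \<kappa>_def using E1 E2 D1 D2 np by simp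
      define K where "K = 2 + 2 / (cmod (\<beta>1 - y))^2"
      have K0: "K > 0" unfolding K_def by (simp add: add_pos_nonneg)
      have "Phi2 m1 m2 w \<ge> (\<kappa> / K) * hrow w" for w
      proof (cases w)
        case (Pair p q)
        have rm: "rmul (p,q) m1 = (p*a1+q*c1, p*b1+q*d1)" unfolding M1 by simp
        have lin: "(p*a1+q*c1)*\<beta>2 + (p*b1+q*d1) = (c1*\<beta>2+d1) * (p*y+q)"
          unfolding y_def using np by (simp add: field_simps)
        have ph: "Phi2 m1 m2 (p,q) = (E1/D1) * (cmod (p*\<beta>1+q))^2
            + (E2 * (cmod (c1*\<beta>2+d1))^2 / (D1 * D2)) * (cmod (p*y+q))^2"
          unfolding PH rm hf1 hf2 lin by (simp add: norm_mult power_mult_distrib)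
        have "Phi2 m1 m2 (p,q) \<ge> \<kappa> * ((cmod (p*\<beta>1+q))^2 + (cmod (p*y+q))^2)"
        proof -
          have "\<kappa> * (cmod (p*\<beta>1+q))^2 \<le> (E1/D1) * (cmod (p*\<beta>1+q))^2"
            unfolding \<kappa>_def by (rule mult_right_mono) simp_all
          moreover have "\<kappa> * (cmod (p*y+q))^2 \<le> (E2 * (cmod (c1*\<beta>2+d1))^2 / (D1 * D2)) * (cmod (p*y+q))^2"
            unfolding \<kappa>_def by (rule mult_right_mono) simp_all
          ultimately show ?thesis unfolding ph by (simp add: algebra_simps)
        qed
        moreover have "hrow (p,q) \<le> K * ((cmod (p*\<beta>1+q))^2 + (cmod (p*y+q))^2)"
          unfolding K_def using two_lin[OF yne[symmetric] b1u] .
        ultimately have "Phi2 m1 m2 (p,q) \<ge> \<kappa> * (hrow (p,q) / K)"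
          using k0 K0 by (smt (verit, best) divide_le_eq mult_left_mono mult.commute)
        then show ?thesis unfolding Pair by simp
      qed
      then show ?thesis using k0 K0 by (intro exI[of _ "\<kappa> / K"]) simp
    qed
  qed
qed




lemma finite_eps:
  fixes P :: "'a \<Rightarrow> real \<Rightarrow> bool"
  assumes "finite S" and mono: "\<And>x \<epsilon> \<epsilon>'. P x \<epsilon> \<Longrightarrow> 0 < \<epsilon>' \<Longrightarrow> \<epsilon>' \<le> \<epsilon> \<Longrightarrow> P x \<epsilon>'"
    and "\<forall>x\<in>S. \<exists>\<epsilon>>0. P x \<epsilon>"
  shows "\<exists>\<epsilon>>0. \<forall>x\<in>S. P x \<epsilon>"
  using assms(1,3)
proof (induction S rule: finite_induct)
  case empty then show ?case using zero_less_one by blast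
next
  case (insert x S)
  obtain e1 where e1: "e1 > 0" "P x e1" using insert.prems by auto
  obtain e2 where e2: "e2 > 0" "\<forall>y\<in>S. P y e2" using insert.IH insert.prems by auto
  have "\<forall>y\<in>insert x S. P y (min e1 e2)" using e1 e2 mono by (auto simp: min_def)
  then show ?case using e1 e2 by (intro exI[of _ "min e1 e2"]) simp
qed

lemma ms_hrow_pos: "\<forall>n\<ge>1. f n \<in> MD \<Longrightarrow> hrow (row (Pm f n)) > 0"
  using ms_P ms_row by metis

lemma bad_growth:
  assumes fin: "finite F" and FMD: "F \<subseteq> MD" and fF: "\<forall>n\<ge>1. f n \<in> F"
  shows "\<exists>\<epsilon>>0. \<forall>k. Some (alpha (f (Suc k))) \<noteq> beta (f (Suc (Suc k))) \<longrightarrow> gs f (Suc (Suc k)) \<ge> (1+\<epsilon>) * gs f k"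
proof -
  have fMD: "\<forall>n\<ge>1. f n \<in> MD" using fF FMD by auto
  define S where "S = {x \<in> F \<times> F. Some (alpha (fst x)) \<noteq> beta (snd x)}"
  have finS: "finite S" unfolding S_def using fin by simp
  define P where "P x \<epsilon> = (\<forall>w. hrow w \<ge> 0 \<longrightarrow> Phi2 (fst x) (snd x) w \<ge> \<epsilon> * hrow w)" for x \<epsilon>
  have mono: "P x \<epsilon>'" if "P x \<epsilon>" "0 < \<epsilon>'" "\<epsilon>' \<le> \<epsilon>" for x \<epsilon> \<epsilon>'
  proof -
    have "\<epsilon>' * hrow w \<le> Phi2 (fst x) (snd x) w" if "hrow w \<ge> 0" for w
    proof -
      have "\<epsilon>' * hrow w \<le> \<epsilon> * hrow w" by (rule mult_right_mono[OF \<open>\<epsilon>' \<le> \<epsilon>\<close> that])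
      also have "\<dots> \<le> Phi2 (fst x) (snd x) w" using \<open>P x \<epsilon>\<close> that unfolding P_def by blast
      finally show ?thesis .
    qed
    then show ?thesis unfolding P_def by blast
  qed
  have each: "\<forall>x\<in>S. \<exists>\<epsilon>>0. P x \<epsilon>"
  proof
    fix x assume "x \<in> S"
    then have "fst x \<in> MD" "snd x \<in> MD" "Some (alpha (fst x)) \<noteq> beta (snd x)" using FMD unfolding S_def by auto
    then show "\<exists>\<epsilon>>0. P x \<epsilon>" using pair_bound unfolding P_def by blast
  qed
  have "\<exists>\<epsilon>>0. \<forall>x\<in>S. P x \<epsilon>"
    apply (rule finite_eps[of S P])
      apply (rule finS)
     apply (erule (2) mono)
    apply (rule each)
    done
  then obtain \<epsilon> where e: "\<epsilon> > 0" "\<forall>x\<in>S. P x \<epsilon>" by blast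
  have "gs f (Suc (Suc k)) \<ge> (1+\<epsilon>) * gs f k" if bad: "Some (alpha (f (Suc k))) \<noteq> beta (f (Suc (Suc k)))" for k
  proof -
    have xS: "(f (Suc k), f (Suc (Suc k))) \<in> S" unfolding S_def using bad fF by simp
    have hp: "hrow (row (Pm f k)) > 0" using ms_hrow_pos[OF fMD] .
    have "P (f (Suc k), f (Suc (Suc k))) \<epsilon>" using e(2) xS by blast
    then have "\<forall>w. hrow w \<ge> 0 \<longrightarrow> Phi2 (f (Suc k)) (f (Suc (Suc k))) w \<ge> \<epsilon> * hrow w"
      unfolding P_def by (simp only: fst_conv snd_conv)
    then have Pb: "Phi2 (f (Suc k)) (f (Suc (Suc k))) (row (Pm f k)) \<ge> \<epsilon> * hrow (row (Pm f k))"
      using hp by (meson less_imp_le)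
    have D0: "Dn f k > 0" using Dn_pos[OF fMD] .
    have d1: "cmod (mdet (f (Suc k))) > 0" using det_f[OF fMD] .
    have d2: "cmod (mdet (f (Suc (Suc k)))) > 0" using det_f[OF fMD] .
    have alg: "A / (Dk * x1) + B / (Dk * x1 * x2) = (A / x1 + B / (x1 * x2)) / Dk"
      if "Dk > 0" "x1 > 0" "x2 > 0" for A B Dk x1 x2 :: real
      using that by (simp add: field_simps)
    have rr: "row (Pm f (Suc k)) = rmul (row (Pm f k)) (f (Suc k))" by (simp add: row_mmul)
    have "gs f (Suc (Suc k)) = gs f k + hform (f (Suc k)) (row (Pm f k)) / (Dn f k * cmod (mdet (f (Suc k))))
       + hform (f (Suc (Suc k))) (rmul (row (Pm f k)) (f (Suc k))) / (Dn f k * cmod (mdet (f (Suc k))) * cmod (mdet (f (Suc (Suc k)))))"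
      using gs_step[OF fMD, of "Suc k"] gs_step[OF fMD, of k] Dn_Suc[OF fMD, of k] Dn_Suc[OF fMD, of "Suc k"] rr
      by simp
    also have "\<dots> = gs f k + Phi2 (f (Suc k)) (f (Suc (Suc k))) (row (Pm f k)) / Dn f k"
      unfolding Phi2_def add.assoc alg[OF D0 d1 d2] ..
    finally have "gs f (Suc (Suc k)) = gs f k + Phi2 (f (Suc k)) (f (Suc (Suc k))) (row (Pm f k)) / Dn f k" .
    also have "\<dots> \<ge> gs f k + \<epsilon> * hrow (row (Pm f k)) / Dn f k" using Pb D0 by (simp add: divide_right_mono)
    finally have X: "gs f (Suc (Suc k)) \<ge> gs f k + \<epsilon> * hrow (row (Pm f k)) / Dn f k" .
    have "\<epsilon> * hrow (row (Pm f k)) / Dn f k = \<epsilon> * gs f k" unfolding gs_def by simp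
    then show ?thesis using X by (simp add: algebra_simps)
  qed
  then show ?thesis using e(1) by blast
qed

lemma unbounded:
  assumes fin: "finite F" and FMD: "F \<subseteq> MD" and fF: "\<forall>n\<ge>1. f n \<in> F"
    and ne: "\<not> (\<forall>\<^sub>F n in sequentially. Some (alpha (f (n - 1))) = beta (f n))"
  shows "\<not> (\<exists>B. \<forall>n. gs f n \<le> B)"
proof
  assume "\<exists>B. \<forall>n. gs f n \<le> B"
  then obtain B where B: "\<And>n. gs f n \<le> B" by blast
  have fMD: "\<forall>n\<ge>1. f n \<in> MD" using fF FMD by auto
  obtain \<epsilon> where e: "\<epsilon> > 0" "\<And>k. Some (alpha (f (Suc k))) \<noteq> beta (f (Suc (Suc k))) \<Longrightarrow> gs f (Suc (Suc k)) \<ge> (1+\<epsilon>) * gs f k"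
    using bad_growth[OF fin FMD fF] by blast
  have freq: "\<exists>k\<ge>N. Some (alpha (f (Suc k))) \<noteq> beta (f (Suc (Suc k)))" for N
  proof -
    have "\<not> (\<forall>n\<ge>N+2. Some (alpha (f (n - 1))) = beta (f n))" using ne unfolding eventually_sequentially by blast
    then obtain n where n: "n \<ge> N+2" "Some (alpha (f (n - 1))) \<noteq> beta (f n)" by blast
    define k where "k = n - 2"
    have nk: "n = Suc (Suc k)" unfolding k_def using n(1) by simp
    have "k \<ge> N" unfolding k_def using n(1) by simp
    moreover have "Some (alpha (f (Suc k))) \<noteq> beta (f (Suc (Suc k)))" using n(2) unfolding nk by simp
    ultimately show ?thesis by blast
  qed
  have ex: "\<exists>n. gs f n \<ge> (1+\<epsilon>)^j" for j
  proof (induction j)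
    case 0 then show ?case using gs_0[OF fMD] by (intro exI[of _ 0]) simp
  next
    case (Suc j)
    then obtain n where n: "gs f n \<ge> (1+\<epsilon>)^j" by blast
    obtain k where k: "k \<ge> n" "Some (alpha (f (Suc k))) \<noteq> beta (f (Suc (Suc k)))" using freq by blast
    have "gs f k \<ge> gs f n" using gs_mono[OF fMD] k(1) by (simp add: monoD)
    then have "(1+\<epsilon>) * gs f k \<ge> (1+\<epsilon>) * (1+\<epsilon>)^j" using n e(1) by (simp add: mult_left_mono)
    then have "gs f (Suc (Suc k)) \<ge> (1+\<epsilon>)^(Suc j)" using e(2)[OF k(2)] by simp
    then show ?case by blast
  qed
  obtain j where j: "B < (1+\<epsilon>)^j" using real_arch_pow[of "1+\<epsilon>" B] e(1) by auto
  obtain n where "gs f n \<ge> (1+\<epsilon>)^j" using ex by blast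
  then show False using B[of n] j by linarith
qed




lemma tan_gen:
  assumes m: "m \<in> MD" and t: "tangent m"
  shows "alpha m = alp0 m" "cmod (alpha m) = 1" "mob_apply m (Some (alpha m)) = Some (bet0 m)"
    "beta m = Some (bet0 m)" "cmod (bet0 m) = 1"
    "hform m (p,q) = cmod (me m) * (cmod (p * bet0 m + q))^2" "cmod (me m) > 0"
proof -
  obtain a b c d where M: "m = (a,b,c,d)" by (cases m) auto
  note T = tangent_alpha[OF m[unfolded M] t[unfolded M]]
  show "alpha m = alp0 m" "cmod (alpha m) = 1" "mob_apply m (Some (alpha m)) = Some (bet0 m)"
    "beta m = Some (bet0 m)" "cmod (bet0 m) = 1" using T unfolding M by simp_all
  show "hform m (p,q) = cmod (me m) * (cmod (p * bet0 m + q))^2" "cmod (me m) > 0"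
    using hform_MD(3,4)[OF m[unfolded M] t[unfolded M]] unfolding M by simp_all
qed

lemma alpha_le1: "m \<in> MD \<Longrightarrow> cmod (alpha m) \<le> 1"
  using tan_gen(2)[of m] nontangent_ab(1)[of m] by (cases "tangent m") simp_all

lemma gamma_eq:
  assumes m: "(a,b,c,d) \<in> MD"
  shows "gamma (a,b,c,d) = (cmod (c * alpha (a,b,c,d) + d))^2 / cmod (a*d-b*c)"
    "gamma (a,b,c,d) > 0"
proof -
  note P = MD_props[OF m]
  have np: "c * alpha (a,b,c,d) + d \<noteq> 0" using nopole[OF P(2) alpha_le1[OF m]] by simp
  have d0: "a*d-b*c \<noteq> 0" using P(1) by (simp add: mob_ok_def)
  show "gamma (a,b,c,d) = (cmod (c * alpha (a,b,c,d) + d))^2 / cmod (a*d-b*c)"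
    unfolding gamma_def by (simp add: norm_divide norm_power)
  then show "gamma (a,b,c,d) > 0" using np d0 by simp
qed

lemma gamma_pos: "m \<in> MD \<Longrightarrow> gamma m > 0"
  by (cases m) (use gamma_eq(2) in blast)

definition "tt f n = (case row (Pm f n) of (p,q) \<Rightarrow> (cmod (p * alpha (f n) + q))^2 / Dn f n)"
definition "kap m = cmod (me m) / cmod (mdet m)"

context
  fixes f :: "nat \<Rightarrow> mob"
  assumes fMD: "\<forall>n\<ge>1. f n \<in> MD"
begin

lemma tt_pos: "tt f n > 0"
proof (cases n)
  case 0 then show ?thesis by (simp add: tt_def Dn_def mdet.simps)
next
  case (Suc k)
  obtain A B c d where md: "Pm f n = (A,B,c,d)" by (cases "Pm f n") auto
  have np: "c * alpha (f n) + d \<noteq> 0"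
    using nopole[OF ms_P[OF fMD, of n, unfolded md] alpha_le1] fMD Suc by simp
  show ?thesis unfolding tt_def md using np Dn_pos[OF fMD, of n] by simp
qed

lemma inc_step:
  assumes t: "tangent (f (Suc n))" and al: "alpha (f n) = bet0 (f (Suc n))"
  shows "gs f (Suc n) = gs f n + kap (f (Suc n)) * tt f n"
proof -
  obtain p q where pq: "row (Pm f n) = (p,q)" by (cases "row (Pm f n)") auto
  have m: "f (Suc n) \<in> MD" using fMD by simp
  have "hform (f (Suc n)) (row (Pm f n)) / Dn f (Suc n)
      = cmod (me (f (Suc n))) * (cmod (p * alpha (f n) + q))^2 / (Dn f n * cmod (mdet (f (Suc n))))"
    unfolding pq tan_gen(6)[OF m t] Dn_Suc[OF fMD] al ..
  also have "\<dots> = kap (f (Suc n)) * tt f n" unfolding kap_def tt_def pq by simp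
  finally show ?thesis unfolding gs_step[OF fMD] by simp
qed

lemma t_step:
  assumes t: "tangent (f (Suc n))" and al: "alpha (f n) = bet0 (f (Suc n))"
  shows "tt f (Suc n) = gamma (f (Suc n)) * tt f n"
proof -
  obtain p q where pq: "row (Pm f n) = (p,q)" by (cases "row (Pm f n)") auto
  have m: "f (Suc n) \<in> MD" using fMD by simp
  obtain a b c d where M: "f (Suc n) = (a,b,c,d)" by (cases "f (Suc n)") auto
  define \<alpha> where "\<alpha> = alpha (f (Suc n))"
  have fa: "mob_apply (a,b,c,d) (Some \<alpha>) = Some (bet0 (f (Suc n)))" using tan_gen(3)[OF m t] unfolding M \<alpha>_def .
  have np: "c*\<alpha>+d \<noteq> 0" and bv: "(a*\<alpha>+b)/(c*\<alpha>+d) = bet0 (f (Suc n))"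
    using fa by (simp_all split: if_splits)
  have row1: "row (Pm f (Suc n)) = (p*a+q*c, p*b+q*d)" using pq M by (simp add: row_mmul)
  have lin: "(p*a+q*c)*\<alpha> + (p*b+q*d) = (c*\<alpha>+d) * (p * alpha (f n) + q)"
    unfolding al bv[symmetric] using np by (simp add: field_simps)
  have "tt f (Suc n) = (cmod (c*\<alpha>+d))^2 * (cmod (p * alpha (f n) + q))^2 / (Dn f n * cmod (a*d-b*c))"
  proof -
    have aM: "alpha (a,b,c,d) = \<alpha>" unfolding \<alpha>_def M ..
    show ?thesis unfolding tt_def row1 Dn_Suc[OF fMD] M aM using lin
      by (simp add: norm_mult power_mult_distrib mdet.simps)
  qed
  also have "\<dots> = gamma (f (Suc n)) * tt f n"
    unfolding M gamma_eq(1)[OF m[unfolded M]] tt_def pq \<alpha>_def[unfolded M] by simp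
  finally show ?thesis .
qed

end



lemma good_iff:
  assumes fin: "finite F" and FMD: "F \<subseteq> MD" and fF: "\<forall>n\<ge>1. f n \<in> F"
    and good: "\<forall>\<^sub>F n in sequentially. Some (alpha (f (n - 1))) = beta (f n)"
  shows "(\<exists>B. \<forall>n. gs f n \<le> B) \<longleftrightarrow> summable (\<lambda>n. \<Prod>i\<in>{1..Suc n}. gamma (f i))"
proof -
  have fMD: "\<forall>n\<ge>1. f n \<in> MD" using fF FMD by auto
  obtain N0 where N0: "\<And>n. n \<ge> N0 \<Longrightarrow> Some (alpha (f (n - 1))) = beta (f n)"
    using good unfolding eventually_sequentially by blast
  define K where "K = max N0 2 - 1"
  have K1: "K \<ge> 1" unfolding K_def by simp
  have H: "Some (alpha (f (K+i))) = beta (f (Suc (K+i)))" for i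
    using N0[of "Suc (K+i)"] unfolding K_def by simp
  have tanS: "tangent (f (Suc (K+i)))" for i
  proof (rule ccontr)
    assume "\<not> tangent (f (Suc (K+i)))"
    then have "beta (f (Suc (K+i))) = None" by (rule nontangent_ab(2))
    then show False using H[of i] by simp
  qed
  have mS: "f (Suc (K+i)) \<in> MD" for i using fMD by simp
  have al: "alpha (f (K+i)) = bet0 (f (Suc (K+i)))" for i
    using H[of i] tan_gen(4)[OF mS tanS] by simp
  define T where "T n = (\<Prod>i\<in>{1..n}. gamma (f i))" for n
  have Tpos: "T n > 0" for n unfolding T_def using gamma_pos fMD by (intro prod_pos) auto
  have TS: "T (Suc n) = T n * gamma (f (Suc n))" for n unfolding T_def by simp
  define C where "C = tt f K / T K"
  have C0: "C > 0" unfolding C_def using tt_pos[OF fMD] Tpos by simp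
  have tK: "tt f (K+i) = C * T (K+i)" for i
  proof (induction i)
    case 0 then show ?case unfolding C_def using Tpos[of K] by simp
  next
    case (Suc i)
    have "tt f (K + Suc i) = gamma (f (Suc (K+i))) * tt f (K+i)"
      using t_step[OF fMD tanS al] by simp
    also have "\<dots> = C * T (K + Suc i)" unfolding Suc using TS[of "K+i"] by (simp add: algebra_simps)
    finally show ?case .
  qed
  have gK: "gs f (K+j) = gs f K + (\<Sum>i<j. kap (f (Suc (K+i))) * (C * T (K+i)))" for j
  proof (induction j)
    case 0 then show ?case by simp
  next
    case (Suc j)
    have "gs f (K + Suc j) = gs f (K+j) + kap (f (Suc (K+j))) * tt f (K+j)"
      using inc_step[OF fMD tanS al] by simp
    then show ?case unfolding Suc tK by simp
  qed
  define KT where "KT = kap ` {m \<in> F. tangent m}"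
  have finKT: "finite (insert 1 KT)" unfolding KT_def using fin by simp
  have KTpos: "\<forall>x\<in>insert 1 KT. x > 0"
  proof
    fix x assume "x \<in> insert 1 KT"
    then show "x > 0"
    proof
      assume "x \<in> KT"
      then obtain m where m: "m \<in> F" "tangent m" "x = kap m" unfolding KT_def by auto
      have "m \<in> MD" using m(1) FMD by auto
      then show "x > 0" unfolding m(3) kap_def using tan_gen(7)[OF _ m(2)] mdet_pos_MD by simp
    qed simp
  qed
  define kmin where "kmin = Min (insert 1 KT)"
  define kmax where "kmax = Max (insert 1 KT)"
  have kmin0: "kmin > 0" unfolding kmin_def using finKT KTpos by (simp add: Min_gr_iff)
  have kin: "kap (f (Suc (K+i))) \<in> insert 1 KT" for i
    unfolding KT_def using fF tanS[of i] by auto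
  have kb: "kmin \<le> kap (f (Suc (K+i)))" "kap (f (Suc (K+i))) \<le> kmax" for i
    unfolding kmin_def kmax_def using finKT kin[of i] by auto
  have kmax0: "kmax > 0" using kb(1)[of 0] kb(2)[of 0] kmin0 by simp
  have sumeq: "summable (\<lambda>n. \<Prod>i\<in>{1..Suc n}. gamma (f i)) \<longleftrightarrow> summable (\<lambda>i. T (i + K))"
  proof -
    have "summable (\<lambda>n. \<Prod>i\<in>{1..Suc n}. gamma (f i)) \<longleftrightarrow> summable (\<lambda>n. T (Suc n))" unfolding T_def ..
    also have "\<dots> \<longleftrightarrow> summable T" by (rule summable_Suc_iff)
    also have "\<dots> \<longleftrightarrow> summable (\<lambda>i. T (i + K))" by simp
    finally show ?thesis .
  qed
  show ?thesis unfolding sumeq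
  proof
    assume "\<exists>B. \<forall>n. gs f n \<le> B"
    then obtain B where B: "\<And>n. gs f n \<le> B" by blast
    show "summable (\<lambda>i. T (i + K))"
    proof (rule summableI_nonneg_bounded)
      show "0 \<le> T (n + K)" for n using Tpos[of "n+K"] by simp
      show "(\<Sum>i<j. T (i + K)) \<le> (B - gs f K) / (kmin * C)" for j
      proof -
        have "kmin * C * (\<Sum>i<j. T (i + K)) = (\<Sum>i<j. kmin * (C * T (K+i)))"
          by (simp add: sum_distrib_left algebra_simps)
        also have "\<dots> \<le> (\<Sum>i<j. kap (f (Suc (K+i))) * (C * T (K+i)))"
          by (rule sum_mono) (use kb(1) C0 Tpos in \<open>simp add: mult_right_mono\<close>)
        also have "\<dots> = gs f (K+j) - gs f K" using gK[of j] by simp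
        also have "\<dots> \<le> B - gs f K" using B[of "K+j"] by simp
        finally show ?thesis using kmin0 C0 by (simp add: field_simps)
      qed
    qed
  next
    assume sm: "summable (\<lambda>i. T (i + K))"
    define S where "S = suminf (\<lambda>i. T (i + K))"
    have pb: "(\<Sum>i<j. T (i + K)) \<le> S" for j unfolding S_def
      by (rule sum_le_suminf[OF sm]) (use Tpos less_imp_le in auto)
    have S0: "S \<ge> 0" using pb[of 0] by simp
    have gb: "gs f (K+j) \<le> gs f K + kmax * C * S" for j
    proof -
      have "(\<Sum>i<j. kap (f (Suc (K+i))) * (C * T (K+i))) \<le> (\<Sum>i<j. kmax * (C * T (K+i)))"
        by (rule sum_mono) (use kb(2) C0 Tpos in \<open>simp add: mult_right_mono\<close>)
      also have "\<dots> = kmax * C * (\<Sum>i<j. T (i + K))" by (simp add: sum_distrib_left algebra_simps)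
      also have "\<dots> \<le> kmax * C * S" using pb[of j] kmax0 C0 by (simp add: mult_left_mono)
      finally show ?thesis using gK[of j] by simp
    qed
    have "gs f n \<le> gs f K + kmax * C * S" for n
    proof (cases "n \<ge> K")
      case True
      then have "n = K + (n - K)" by simp
      then show ?thesis using gb[of "n - K"] by metis
    next
      case False
      then have "gs f n \<le> gs f K" using gs_mono[OF fMD] by (simp add: monoD)
      moreover have "kmax * C * S \<ge> 0" using kmax0 C0 S0 by simp
      ultimately show ?thesis by linarith
    qed
    then show "\<exists>B. \<forall>n. gs f n \<le> B" by blast
  qed
qed

theorem theorem1p2:
  fixes \<F> :: "mob set" and f :: "nat \<Rightarrow> mob"
  assumes "finite \<F>" and "\<F> \<subseteq> MD"
    and "\<forall>n\<ge>1. f n \<in> \<F>"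
  shows "limit_disc_type f \<longleftrightarrow>
           ((\<forall>\<^sub>F n in sequentially. Some (alpha (f (n - 1))) = beta (f n)) \<and>
            summable (\<lambda>n. \<Prod>i\<in>{1..Suc n}. gamma (f i)))"
proof -
  have fMD: "\<forall>n\<ge>1. f n \<in> MD" using assms(2,3) by auto
  show ?thesis unfolding ldt_iff[OF fMD]
    using unbounded[OF assms] good_iff[OF assms] by blast
qed


end
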